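(* Let $A^\star\in\mathbb{R}^{n\times n}$, $B^\star\in\mathbb{R}^{n\times m}$, $C^\star\in\mathbb{R}^{p\times n}$ with $(A^\star,C^\star)$ observable with observability index $\ell^\star$ and $p\ell^\star>n$. Let $A_a\in\mathbb{R}^{(p\ell^\star-n)\times(p\ell^\star-n)}$, $B_a\in\mathbb{R}^{(p\ell^\star-n)\times m}$, $C_a\in\mathbb{R}^{p\times(p\ell^\star-n)}$ be chosen matrices. Let data $\{u^{\mathrm m}(k),y^{\mathrm m}_{\mathrm{aug}}(k)\}_{k=0}^T$ be generated as in the context, let $\Psi_0^{\mathrm{aug}},\Theta^{\mathrm{aug}}_{22},\mathscr{A}_{\mathrm{aug}},\mathscr{B}_{\mathrm{aug}},\mathscr{C}_{\mathrm{aug}},\mathbf{F}_{\ell^\star},\mathbf{L}_{\ell^\star},\mathbf{B}_{\ell^\star}$ be as in the context, assume $\Delta^{\mathrm{aug}}_{10}{\Delta^{\mathrm{aug}}_{10}}^\top\preceq\Theta^{\mathrm{aug}}$ and $\Psi_0^{\mathrm{aug}}{\Psi_0^{\mathrm{aug}}}^\top\succ\Theta_{22}^{\mathrm{aug}}$. Suppose there exist $\mathbf{Y}$ and $P=P^\top\succ0$ such that $$\begin{bmatrix}-P-\mathbf{L}_{\ell^\star}\mathscr{C}_{\mathrm{aug}}\mathbf{L}_{\ell^\star}^\top & \mathbf{F}_{\ell^\star}P+\mathbf{B}_{\ell^\star}\mathbf{Y} & \mathbf{L}_{\ell^\star}\mathscr{B}_{\mathrm{aug}}\\ P\mathbf{F}_{\ell^\star}^\top+\mathbf{Y}^\top\mathbf{B}_{\ell^\star}^\top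 & -P & -P\\ \mathscr{B}_{\mathrm{aug}}^\top\mathbf{L}_{\ell^\star}^\top & -P & -\mathscr{A}_{\mathrm{aug}}\end{bmatrix}\prec0,$$ and let $\mathbf{K}=\mathbf{Y}P^{-1}$. Then $(x,x_a,\chi)=0$ is globally asymptotically stable for the feedback interconnection of the plant $x^+=A^\star x+B^\star u$, $y=C^\star x$ with the controller $$\begin{bmatrix}x_a^+\\\chi^+\end{bmatrix}=\begin{bmatrix}A_a & B_a\mathbf{K}\\ \mathbf{L}_{\ell^\star}C_a & \mathbf{F}_{\ell^\star}+\mathbf{B}_{\ell^\star}\mathbf{K}\end{bmatrix}\begin{bmatrix}x_a\\\chi\end{bmatrix}+\begin{bmatrix}0\\\mathbf{L}_{\ell^\star}\end{bmatrix}y,\qquad u=\mathbf{K}\chi.$$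
   Context: Notation: $(v_1,\dots,v_r)$ denotes a stacked column vector. Let $\ell=\ell^\star$. $\mathbf{F}_\ell=\mathrm{blockdiag}(S_p,S_m)$ where $S_q\in\mathbb{R}^{q\ell\times q\ell}$ has blocks $I_q$ in block positions $(i,i+1)$, $i=1,\dots,\ell-1$, and zeros elsewhere; $\mathbf{L}_\ell\in\mathbb{R}^{(p\ell+m\ell)\times p}$ has $I_p$ in rows $p\ell-p+1,\dots,p\ell$ and zeros elsewhere; $\mathbf{B}_\ell\in\mathbb{R}^{(p\ell+m\ell)\times m}$ has $I_m$ in its last $m$ rows, zeros elsewhere. Data generation (augmented experiment): for $k=0,\dots,T$, with unknown noises $d^u,d^y$ and applied signal $u^{\mathrm m}$, the plant evolves as $x(k+1)=A^\star x(k)+B^\star(u^{\mathrm m}(k)-d^u(k))$, an artificial state evolves as $x_a^{\mathrm m}(k+1)=A_ax_a^{\mathrm m}(k)+B_au^{\mathrm m}(k)$, and the measured output is $y^{\mathrm m}_{\mathrm{aug}}(k)=C^\star x(k)+d^y(k)+C_ax^{\mathrm m}_a(k)$. Define $d^{y_a}(k)=\sum_{j=0}^{k-1}C_aA_a^{k-j-1}B_ad^u(j)$ and $d^{y_{\mathrm{aug}}}=d^y+d^{y_a}$. Matrices with columns indexed by $j=0,\dots,T-\ell$: column $j$ of $\Psi_1^{\mathrm{aug}}$ is $(y^{\mathrm m}_{\mathrm{aug}}(j+1),\dots,y^{\mathrm m}_{\mathrm{aug}}(j+\ell),u^{\mathrm m}(j+1),\dots,u^{\mathrm m}(j+\ell))$;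 column $j$ of $\Psi_0^{\mathrm{aug}}$ is $(y^{\mathrm m}_{\mathrm{aug}}(j),\dots,y^{\mathrm m}_{\mathrm{aug}}(j+\ell-1),u^{\mathrm m}(j),\dots,u^{\mathrm m}(j+\ell-1))$; column $j$ of $\Delta^{\mathrm{aug}}_{10}$ is $(d^{y_{\mathrm{aug}}}(j+\ell),d^{y_{\mathrm{aug}}}(j),\dots,d^{y_{\mathrm{aug}}}(j+\ell-1),d^u(j),\dots,d^u(j+\ell-1))$. $\Theta^{\mathrm{aug}}=(\Theta^{\mathrm{aug}})^\top\succeq0$ of size $p+p\ell+m\ell$ is given and partitioned as $\begin{bmatrix}\Theta^{\mathrm{aug}}_{11}&\Theta^{\mathrm{aug}}_{12}\\ (\Theta^{\mathrm{aug}}_{12})^\top&\Theta^{\mathrm{aug}}_{22}\end{bmatrix}$ with $\Theta^{\mathrm{aug}}_{11}\in\mathbb{R}^{p\times p}$. Define $\mathscr{A}_{\mathrm{aug}}=\Psi_0^{\mathrm{aug}}{\Psi_0^{\mathrm{aug}}}^\top-\Theta^{\mathrm{aug}}_{22}$, $\mathscr{B}_{\mathrm{aug}}=-\mathbf{L}_\ell^\top\Psi_1^{\mathrm{aug}}{\Psi_0^{\mathrm{aug}}}^\top+\Theta^{\mathrm{aug}}_{12}$, $\mathscr{C}_{\mathrm{aug}}=\mathbf{L}_\ell^\top\Psi_1^{\mathrm{aug}}{\Psi_1^{\mathrm{aug}}}^\top\mathbf{L}_\ell-\Theta^{\mathrm{aug}}_{11}$. *)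

theory Defs
  imports "Jordan_Normal_Form.Matrix" "Jordan_Normal_Form.Gauss_Jordan_Elimination"
          "Jordan_Normal_Form.DL_Rank"
begin

definition obs_mat :: "real mat \<Rightarrow> real mat \<Rightarrow> nat \<Rightarrow> real mat" where
  "obs_mat A C l = mat (dim_row C * l) (dim_col A)
     (\<lambda>(r,c). (C * (A ^\<^sub>m (r div dim_row C))) $$ (r mod dim_row C, c))"

definition obs_index :: "real mat \<Rightarrow> real mat \<Rightarrow> nat \<Rightarrow> bool" where
  "obs_index A C l \<longleftrightarrow>
     vec_space.rank (dim_row C * l) (obs_mat A C l) = dim_col A \<and>
     (\<forall>k<l. vec_space.rank (dim_row C * k) (obs_mat A C k) \<noteq> dim_col A)"

definition psd_mat :: "real mat \<Rightarrow> nat \<Rightarrow> bool" where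
  "psd_mat M N \<longleftrightarrow> M \<in> carrier_mat N N \<and> M\<^sup>T = M \<and>
     (\<forall>v\<in>carrier_vec N. 0 \<le> v \<bullet> (M *\<^sub>v v))"

definition pd_mat :: "real mat \<Rightarrow> nat \<Rightarrow> bool" where
  "pd_mat M N \<longleftrightarrow> M \<in> carrier_mat N N \<and> M\<^sup>T = M \<and>
     (\<forall>v\<in>carrier_vec N. v \<noteq> 0\<^sub>v N \<longrightarrow> 0 < v \<bullet> (M *\<^sub>v v))"

definition nd_mat :: "real mat \<Rightarrow> nat \<Rightarrow> bool" where
  "nd_mat M N \<longleftrightarrow> pd_mat (- M) N"

(* S_q : (q l) x (q l), identity blocks at block positions (i,i+1) *)
definition shift_mat :: "nat \<Rightarrow> nat \<Rightarrow> real mat" where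
  "shift_mat q l = mat (q*l) (q*l) (\<lambda>(r,c). if c = r + q then 1 else 0)"

definition F_mat :: "nat \<Rightarrow> nat \<Rightarrow> nat \<Rightarrow> real mat" where
  "F_mat p m l = four_block_mat (shift_mat p l) (0\<^sub>m (p*l) (m*l))
                                (0\<^sub>m (m*l) (p*l)) (shift_mat m l)"

definition L_mat :: "nat \<Rightarrow> nat \<Rightarrow> nat \<Rightarrow> real mat" where
  "L_mat p m l = mat (p*l + m*l) p (\<lambda>(r,c). if r = p*l - p + c then 1 else 0)"

definition B_mat :: "nat \<Rightarrow> nat \<Rightarrow> nat \<Rightarrow> real mat" where
  "B_mat p m l = mat (p*l + m*l) m (\<lambda>(r,c). if r = p*l + m*l - m + c then 1 else 0)"

(* stacked vector (y(s),...,y(s+l-1), u(s),...,u(s+l-1)) *)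
definition stack_yu :: "nat \<Rightarrow> nat \<Rightarrow> nat \<Rightarrow> (nat \<Rightarrow> real vec) \<Rightarrow> (nat \<Rightarrow> real vec) \<Rightarrow> nat \<Rightarrow> real vec" where
  "stack_yu p m l y u s = vec (p*l + m*l) (\<lambda>i.
     if i < p*l then y (s + i div p) $ (i mod p)
     else u (s + (i - p*l) div m) $ ((i - p*l) mod m))"

definition Psi1 :: "nat \<Rightarrow> nat \<Rightarrow> nat \<Rightarrow> nat \<Rightarrow> (nat \<Rightarrow> real vec) \<Rightarrow> (nat \<Rightarrow> real vec) \<Rightarrow> real mat" where
  "Psi1 p m l T y u = mat (p*l + m*l) (T + 1 - l) (\<lambda>(i,j). stack_yu p m l y u (j+1) $ i)"

definition Psi0 :: "nat \<Rightarrow> nat \<Rightarrow> nat \<Rightarrow> nat \<Rightarrow> (nat \<Rightarrow> real vec) \<Rightarrow> (nat \<Rightarrow> real vec) \<Rightarrow> real mat" where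
  "Psi0 p m l T y u = mat (p*l + m*l) (T + 1 - l) (\<lambda>(i,j). stack_yu p m l y u j $ i)"

definition dya :: "real mat \<Rightarrow> real mat \<Rightarrow> real mat \<Rightarrow> (nat \<Rightarrow> real vec) \<Rightarrow> nat \<Rightarrow> real vec" where
  "dya Aa Ba Ca du k = vec (dim_row Ca)
     (\<lambda>i. \<Sum>j<k. (Ca * (Aa ^\<^sub>m (k - j - 1)) * Ba *\<^sub>v du j) $ i)"

definition Delta10 :: "nat \<Rightarrow> nat \<Rightarrow> nat \<Rightarrow> nat \<Rightarrow> (nat \<Rightarrow> real vec) \<Rightarrow> (nat \<Rightarrow> real vec) \<Rightarrow> real mat" where
  "Delta10 p m l T dyaug du = mat (p + p*l + m*l) (T + 1 - l) (\<lambda>(i,j).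
     if i < p then dyaug (j + l) $ i
     else stack_yu p m l dyaug du j $ (i - p))"

definition Th11 :: "nat \<Rightarrow> real mat \<Rightarrow> real mat" where
  "Th11 p Th = mat p p (\<lambda>(i,j). Th $$ (i,j))"
definition Th12 :: "nat \<Rightarrow> nat \<Rightarrow> real mat \<Rightarrow> real mat" where
  "Th12 p N Th = mat p N (\<lambda>(i,j). Th $$ (i, p + j))"
definition Th22 :: "nat \<Rightarrow> nat \<Rightarrow> real mat \<Rightarrow> real mat" where
  "Th22 p N Th = mat N N (\<lambda>(i,j). Th $$ (p + i, p + j))"

definition block3 :: "nat \<Rightarrow> (nat \<Rightarrow> nat \<Rightarrow> real mat) \<Rightarrow> real mat" where
  "block3 N M = mat (3*N) (3*N) (\<lambda>(i,j). M (i div N) (j div N) $$ (i mod N, j mod N))"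

definition vnorm :: "real vec \<Rightarrow> real" where
  "vnorm v = sqrt (v \<bullet> v)"

definition closed_loop_sol where
  "closed_loop_sol A B C Aa Ba Ca F L Bl K n na N x xa chi \<longleftrightarrow>
     (\<forall>k. x k \<in> carrier_vec n \<and> xa k \<in> carrier_vec na \<and> chi k \<in> carrier_vec N) \<and>
     (\<forall>k. x (Suc k) = A *\<^sub>v x k + B *\<^sub>v (K *\<^sub>v chi k) \<and>
          xa (Suc k) = Aa *\<^sub>v xa k + (Ba * K) *\<^sub>v chi k \<and>
          chi (Suc k) = (L * Ca) *\<^sub>v xa k + (F + Bl * K) *\<^sub>v chi k + L *\<^sub>v (C *\<^sub>v x k))"

definition cl_norm :: "real vec \<Rightarrow> real vec \<Rightarrow> real vec \<Rightarrow> real" where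
  "cl_norm x xa chi = sqrt (x \<bullet> x + xa \<bullet> xa + chi \<bullet> chi)"

definition closed_loop_GAS where
  "closed_loop_GAS A B C Aa Ba Ca F L Bl K n na N \<longleftrightarrow>
     (\<forall>\<epsilon>>0. \<exists>\<delta>>0. \<forall>x xa chi.
        closed_loop_sol A B C Aa Ba Ca F L Bl K n na N x xa chi \<longrightarrow>
        cl_norm (x 0) (xa 0) (chi 0) < \<delta> \<longrightarrow>
        (\<forall>k. cl_norm (x k) (xa k) (chi k) < \<epsilon>)) \<and>
     (\<forall>x xa chi. closed_loop_sol A B C Aa Ba Ca F L Bl K n na N x xa chi \<longrightarrow>
        (\<lambda>k. cl_norm (x k) (xa k) (chi k)) \<longlonglongrightarrow> 0)"

end

theory Submission
  imports Defs "Jordan_Normal_Form.Spectral_Radius"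
begin

lemma qf_sum: assumes P: "P \<in> carrier_mat N N" and x: "x \<in> carrier_vec N"
  shows "x \<bullet> (P *\<^sub>v x) = (\<Sum>i<N. \<Sum>j<N. x$i * P$$(i,j) * x$j)"
  using P x by (auto simp: scalar_prod_def row_def sum_distrib_left mult.assoc atLeast0LessThan intro!: sum.cong)

lemma qf_sum_vec: assumes P: "P \<in> carrier_mat N N"
  shows "vec N f \<bullet> (P *\<^sub>v vec N f) = (\<Sum>i<N. \<Sum>j<N. f i * P$$(i,j) * f j)"
  by (subst qf_sum[OF P], simp, intro sum.cong refl, simp)

lemma eig_lt1:
  fixes Phi P :: "real mat"
  assumes Phi: "Phi \<in> carrier_mat N N" and P: "P \<in> carrier_mat N N"
  and pos: "\<And>x. x \<in> carrier_vec N \<Longrightarrow> x \<noteq> 0\<^sub>v N \<Longrightarrow> 0 < x \<bullet> (P *\<^sub>v x)"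
  and dec: "\<And>a. a \<in> carrier_vec N \<Longrightarrow> a \<noteq> 0\<^sub>v N \<Longrightarrow>
       (Phi\<^sup>T *\<^sub>v a) \<bullet> (P *\<^sub>v (Phi\<^sup>T *\<^sub>v a)) < a \<bullet> (P *\<^sub>v a)"
  and ev: "eigenvalue (map_mat complex_of_real Phi) lam"
  shows "cmod lam < 1"
proof -
  define R where "R = Phi\<^sup>T"
  have R: "R \<in> carrier_mat N N" using Phi by (simp add: R_def)
  define Pc where "Pc = map_mat complex_of_real Phi"
  have Pc: "Pc \<in> carrier_mat N N" using Phi by (simp add: Pc_def)
  have "poly (char_poly Pc) lam = 0" using ev eigenvalue_root_char_poly[OF Pc] by (simp add: Pc_def)
  hence "poly (char_poly (Pc\<^sup>T)) lam = 0" using Pc by simp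
  hence "eigenvalue (Pc\<^sup>T) lam" using eigenvalue_root_char_poly[of "Pc\<^sup>T" N] Pc by simp
  then obtain w where w: "w \<in> carrier_vec N" "w \<noteq> 0\<^sub>v N" "Pc\<^sup>T *\<^sub>v w = lam \<cdot>\<^sub>v w"
    unfolding eigenvalue_def eigenvector_def using Pc by auto
  have PcT: "Pc\<^sup>T = map_mat complex_of_real R" by (simp add: Pc_def R_def map_mat_transpose)
  define a where "a = vec N (\<lambda>i. Re (w$i))"
  define b where "b = vec N (\<lambda>i. Im (w$i))"
  have a: "a \<in> carrier_vec N" and b: "b \<in> carrier_vec N" by (auto simp: a_def b_def)
  define al where "al = Re lam"
  define be where "be = Im lam"
  have comp: "(Pc\<^sup>T *\<^sub>v w) $ i = (\<Sum>j<N. complex_of_real (R$$(i,j)) * w$j)" if "i<N" for i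
    using that R w(1) unfolding PcT by (auto simp: scalar_prod_def row_def atLeast0LessThan intro!: sum.cong)
  have Ra: "R *\<^sub>v a = vec N (\<lambda>i. al * a$i - be * b$i)"
  proof (rule eq_vecI)
    fix i assume i: "i < dim_vec (vec N (\<lambda>i. al * a$i - be * b$i))"
    hence i: "i < N" by simp
    have "(R *\<^sub>v a) $ i = (\<Sum>j<N. R$$(i,j) * a$j)"
      using i R a by (auto simp: scalar_prod_def row_def atLeast0LessThan intro!: sum.cong)
    also have "\<dots> = Re ((Pc\<^sup>T *\<^sub>v w) $ i)" unfolding comp[OF i] Re_sum
      by (auto simp: a_def intro!: sum.cong)
    also have "\<dots> = al * a$i - be * b$i" using w(3) w(1) i by (simp add: a_def b_def al_def be_def)
    finally show "(R *\<^sub>v a) $ i = vec N (\<lambda>i. al * a$i - be * b$i) $ i" using i by simp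
  qed (use R in auto)
  have Rb: "R *\<^sub>v b = vec N (\<lambda>i. al * b$i + be * a$i)"
  proof (rule eq_vecI)
    fix i assume i: "i < dim_vec (vec N (\<lambda>i. al * b$i + be * a$i))"
    hence i: "i < N" by simp
    have "(R *\<^sub>v b) $ i = (\<Sum>j<N. R$$(i,j) * b$j)"
      using i R b by (auto simp: scalar_prod_def row_def atLeast0LessThan intro!: sum.cong)
    also have "\<dots> = Im ((Pc\<^sup>T *\<^sub>v w) $ i)" unfolding comp[OF i] Im_sum
      by (auto simp: b_def intro!: sum.cong)
    also have "\<dots> = al * b$i + be * a$i" using w(3) w(1) i by (simp add: a_def b_def al_def be_def)
    finally show "(R *\<^sub>v b) $ i = vec N (\<lambda>i. al * b$i + be * a$i) $ i" using i by simp
  qed (use R in auto)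
  define Q where "Q x = x \<bullet> (P *\<^sub>v x)" for x
  have le: "Q (R *\<^sub>v x) \<le> Q x" if "x \<in> carrier_vec N" for x
  proof (cases "x = 0\<^sub>v N")
    case True
    have "R *\<^sub>v 0\<^sub>v N = 0\<^sub>v N" using R by (intro eq_vecI) (auto simp: scalar_prod_def)
    thus ?thesis using True P by (simp add: Q_def)
  next
    case False thus ?thesis using dec[OF that] by (simp add: Q_def R_def)
  qed
  have lt: "Q (R *\<^sub>v x) < Q x" if "x \<in> carrier_vec N" "x \<noteq> 0\<^sub>v N" for x
    using dec[OF that] by (simp add: Q_def R_def)
  have Qnn: "0 \<le> Q x" if "x \<in> carrier_vec N" for x
  proof (cases "x = 0\<^sub>v N")
    case True thus ?thesis using P by (simp add: Q_def)
  next
    case False thus ?thesis using pos[OF that] by (simp add: Q_def)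
  qed
  have ab: "a \<noteq> 0\<^sub>v N \<or> b \<noteq> 0\<^sub>v N"
  proof (rule ccontr)
    assume "\<not> ?thesis"
    hence a0: "a = 0\<^sub>v N" and b0: "b = 0\<^sub>v N" by auto
    have "w$i = 0" if i: "i<N" for i
    proof -
      have "a$i = 0" using a0 i by simp
      hence 1: "Re (w$i) = 0" using i by (simp add: a_def)
      have "b$i = 0" using b0 i by simp
      hence 2: "Im (w$i) = 0" using i by (simp add: b_def)
      show ?thesis using 1 2 by (simp add: complex_eq_iff)
    qed
    hence "w = 0\<^sub>v N" using w(1) by (intro eq_vecI) auto
    thus False using w(2) by simp
  qed
  have sumlt: "Q (R *\<^sub>v a) + Q (R *\<^sub>v b) < Q a + Q b"
  proof (cases "a = 0\<^sub>v N")
    case False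
    show ?thesis using lt[OF a False] le[OF b] by linarith
  next
    case True
    hence bnz: "b \<noteq> 0\<^sub>v N" using ab by simp
    show ?thesis using lt[OF b bnz] le[OF a] by linarith
  qed
  have Spos: "Q a + Q b > 0"
  proof (cases "a = 0\<^sub>v N")
    case False
    show ?thesis using pos[OF a False] Qnn[OF b] unfolding Q_def by linarith
  next
    case True
    hence bnz: "b \<noteq> 0\<^sub>v N" using ab by simp
    show ?thesis using pos[OF b bnz] Qnn[OF a] unfolding Q_def by linarith
  qed
  have eqn: "Q (R *\<^sub>v a) + Q (R *\<^sub>v b) = (al^2 + be^2) * (Q a + Q b)"
  proof -
    have c1: "R *\<^sub>v a \<in> carrier_vec N" "R *\<^sub>v b \<in> carrier_vec N" using R a b by auto
    have "Q (R *\<^sub>v a) + Q (R *\<^sub>v b) = (\<Sum>i<N. \<Sum>j<N. (al * a$i - be * b$i) * P$$(i,j) * (al * a$j - be * b$j)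
       + (al * b$i + be * a$i) * P$$(i,j) * (al * b$j + be * a$j))"
      unfolding Q_def Ra Rb qf_sum_vec[OF P] by simp
    also have "\<dots> = (\<Sum>i<N. \<Sum>j<N. (al^2 + be^2) * (a$i * P$$(i,j) * a$j + b$i * P$$(i,j) * b$j))"
      by (intro sum.cong refl) (simp add: algebra_simps power2_eq_square)
    also have "\<dots> = (al^2 + be^2) * (Q a + Q b)"
      unfolding Q_def qf_sum[OF P a] qf_sum[OF P b]
      by (simp add: sum_distrib_left distrib_left sum.distrib)
    finally show ?thesis .
  qed
  have "(al^2 + be^2) * (Q a + Q b) < 1 * (Q a + Q b)" using sumlt eqn by simp
  hence "al^2 + be^2 < 1" using Spos by (simp only: mult_less_cancel_right_pos)
  thus ?thesis unfolding al_def be_def cmod_def by simp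
qed

lemma smult_mat_vec: "A \<in> carrier_mat n n \<Longrightarrow> v \<in> carrier_vec n \<Longrightarrow> (c \<cdot>\<^sub>m A) *\<^sub>v v = c \<cdot>\<^sub>v (A *\<^sub>v v)"
  by (intro eq_vecI) (auto simp: scalar_prod_def row_def sum_distrib_left mult.assoc)

lemma smult_pow_mat: "(A :: complex mat) \<in> carrier_mat n n \<Longrightarrow> (c \<cdot>\<^sub>m A) ^\<^sub>m k = (c ^ k) \<cdot>\<^sub>m (A ^\<^sub>m k)"
proof (induction k)
  case 0 thus ?case by (intro eq_matI) auto
next
  case (Suc k)
  have "(c \<cdot>\<^sub>m A) ^\<^sub>m Suc k = ((c ^ k) \<cdot>\<^sub>m (A ^\<^sub>m k)) * (c \<cdot>\<^sub>m A)" using Suc by simp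
  also have "\<dots> = c ^ k \<cdot>\<^sub>m (c \<cdot>\<^sub>m (A ^\<^sub>m k * A))"
  proof -
    have P1: "A ^\<^sub>m k \<in> carrier_mat n n" using pow_carrier_mat[OF Suc.prems] .
    have cA: "c \<cdot>\<^sub>m A \<in> carrier_mat n n" using Suc.prems by simp
    show ?thesis unfolding mult_smult_assoc_mat[OF P1 cA] mult_smult_distrib[OF P1 Suc.prems] ..
  qed
  also have "\<dots> = (c ^ Suc k) \<cdot>\<^sub>m (A ^\<^sub>m Suc k)" by (intro eq_matI) auto
  finally show ?case .
qed

lemma pow_decay:
  fixes Phi P :: "real mat"
  assumes Phi: "Phi \<in> carrier_mat N N" and N: "N > 0" and P: "P \<in> carrier_mat N N"
  and pos: "\<And>x. x \<in> carrier_vec N \<Longrightarrow> x \<noteq> 0\<^sub>v N \<Longrightarrow> 0 < x \<bullet> (P *\<^sub>v x)"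
  and dec: "\<And>a. a \<in> carrier_vec N \<Longrightarrow> a \<noteq> 0\<^sub>v N \<Longrightarrow>
       (Phi\<^sup>T *\<^sub>v a) \<bullet> (P *\<^sub>v (Phi\<^sup>T *\<^sub>v a)) < a \<bullet> (P *\<^sub>v a)"
  shows "\<exists>C g. g > 1 \<and> (\<forall>k i j. i < N \<longrightarrow> j < N \<longrightarrow> \<bar>(Phi ^\<^sub>m k) $$ (i,j)\<bar> \<le> C / g ^ k)"
proof -
  define Pc where "Pc = map_mat complex_of_real Phi"
  have Pc: "Pc \<in> carrier_mat N N" using Phi by (simp add: Pc_def)
  define r where "r = spectral_radius Pc"
  have "r \<in> norm ` spectrum Pc" using spectral_radius_mem_max(1)[OF Pc N] by (simp add: r_def)
  then obtain lam where lam: "eigenvalue Pc lam" "r = cmod lam" unfolding spectrum_def by auto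
  have r1: "r < 1" using eig_lt1[OF Phi P pos dec] lam by (simp add: Pc_def)
  have r0: "r \<ge> 0" using lam by simp
  define g where "g = 2 / (1 + r)"
  have g1: "g > 1" using r1 r0 by (simp add: g_def)
  have gr: "g * r < 1" using r1 r0 by (simp add: g_def field_simps)
  define A where "A = complex_of_real g \<cdot>\<^sub>m Pc"
  have A: "A \<in> carrier_mat N N" using Pc by (simp add: A_def)
  have "spectral_radius A \<in> norm ` spectrum A" using spectral_radius_mem_max(1)[OF A N] by simp
  then obtain mu where mu: "eigenvalue A mu" "spectral_radius A = cmod mu" unfolding spectrum_def by auto
  from mu(1) obtain v where v: "v \<in> carrier_vec N" "v \<noteq> 0\<^sub>v N" "A *\<^sub>v v = mu \<cdot>\<^sub>v v"
    unfolding eigenvalue_def eigenvector_def using A by auto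
  have gnz: "complex_of_real g \<noteq> 0" using g1 by simp
  have "Pc *\<^sub>v v = (mu / complex_of_real g) \<cdot>\<^sub>v v"
  proof -
    have "complex_of_real g \<cdot>\<^sub>v (Pc *\<^sub>v v) = mu \<cdot>\<^sub>v v" using v(3) smult_mat_vec[OF Pc v(1)] by (simp add: A_def)
    hence "(1 / complex_of_real g) \<cdot>\<^sub>v (complex_of_real g \<cdot>\<^sub>v (Pc *\<^sub>v v)) = (1 / complex_of_real g) \<cdot>\<^sub>v (mu \<cdot>\<^sub>v v)" by simp
    thus ?thesis using gnz by (simp add: smult_smult_assoc)
  qed
  hence "eigenvalue Pc (mu / complex_of_real g)" unfolding eigenvalue_def eigenvector_def using v Pc by auto
  hence "cmod (mu / complex_of_real g) \<le> r"
    using spectral_radius_mem_max(2)[OF Pc N] unfolding r_def spectrum_def by auto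
  hence "cmod mu \<le> g * r" using g1 by (simp add: norm_divide field_simps)
  hence "spectral_radius A < 1" using mu(2) gr by simp
  from spectral_radius_jnf_norm_bound_less_1_upper_triangular[OF A this]
  obtain c where c: "\<And>k. norm_bound (A ^\<^sub>m k) c" by auto
  show ?thesis
  proof (intro exI conjI allI impI)
    show "g > 1" by fact
    fix k i j assume i: "i < N" and j: "j < N"
    have "A ^\<^sub>m k = (complex_of_real g ^ k) \<cdot>\<^sub>m map_mat complex_of_real (Phi ^\<^sub>m k)"
      unfolding A_def smult_pow_mat[OF Pc] unfolding Pc_def of_real_hom.mat_hom_pow[OF Phi] by simp
    hence e: "(A ^\<^sub>m k) $$ (i,j) = complex_of_real (g ^ k * (Phi ^\<^sub>m k) $$ (i,j))"
      using i j Phi by (simp add: pow_carrier_mat)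
    have nb: "norm ((A ^\<^sub>m k) $$ (i,j)) \<le> c" using c[of k] i j A
      unfolding norm_bound_def by (simp add: pow_carrier_mat)
    have "norm (complex_of_real (g ^ k * (Phi ^\<^sub>m k) $$ (i,j))) \<le> c" using nb unfolding e .
    hence "\<bar>g ^ k * (Phi ^\<^sub>m k) $$ (i,j)\<bar> \<le> c" by (simp only: norm_of_real)
    hence "g ^ k * \<bar>(Phi ^\<^sub>m k) $$ (i,j)\<bar> \<le> c" using g1 by (simp add: abs_mult)
    thus "\<bar>(Phi ^\<^sub>m k) $$ (i,j)\<bar> \<le> c / g ^ k" using g1 by (simp add: field_simps)
  qed
qed

lemma sum_split_add: fixes f :: "nat \<Rightarrow> 'a::comm_monoid_add" and N :: nat shows "(\<Sum>i<p+N. f i) = (\<Sum>i<p. f i) + (\<Sum>i<N. f (p+i))"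
  by (induction N) (auto simp: add.assoc)

lemma sum_split_mult: fixes f :: "nat \<Rightarrow> 'a::comm_monoid_add" and k :: nat shows "(\<Sum>i<k*N. f i) = (\<Sum>b<k. \<Sum>i<N. f (b*N+i))"
proof (induction k)
  case 0 thus ?case by simp
next
  case (Suc k)
  have e: "Suc k * N = k*N + N" by simp
  have "(\<Sum>i<Suc k*N. f i) = (\<Sum>i<k*N. f i) + (\<Sum>i<N. f (k*N+i))" unfolding e by (rule sum_split_add)
  also have "\<dots> = (\<Sum>b<Suc k. \<Sum>i<N. f (b*N+i))" unfolding Suc.IH by (simp only: sum.lessThan_Suc)
  finally show ?case .
qed

lemma dot_sum: "w \<in> carrier_vec n \<Longrightarrow> v \<bullet> w = (\<Sum>i<n. v$i * w$i)"
  by (simp add: scalar_prod_def atLeast0LessThan)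

lemma bil_sum: assumes A: "A \<in> carrier_mat r c" and x: "x \<in> carrier_vec r" and y: "y \<in> carrier_vec c"
  shows "x \<bullet> (A *\<^sub>v y) = (\<Sum>i<r. \<Sum>j<c. x$i * A$$(i,j) * y$j)"
  using A x y by (auto simp: scalar_prod_def row_def sum_distrib_left mult.assoc atLeast0LessThan intro!: sum.cong)

lemma lin_rep:
  fixes f :: "real vec \<Rightarrow> real"
  assumes add: "\<And>x y. x \<in> carrier_vec N \<Longrightarrow> y \<in> carrier_vec N \<Longrightarrow> f (x + y) = f x + f y"
  and smul: "\<And>c x. x \<in> carrier_vec N \<Longrightarrow> f (c \<cdot>\<^sub>v x) = c * f x"
  and z: "z \<in> carrier_vec N"
  shows "f z = (\<Sum>j<N. z$j * f (unit_vec N j))"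
proof -
  define tr where "tr k = vec N (\<lambda>i. if i < k then z$i else 0)" for k
  have trc: "tr k \<in> carrier_vec N" for k by (simp add: tr_def)
  have "k \<le> N \<Longrightarrow> f (tr k) = (\<Sum>j<k. z$j * f (unit_vec N j))" for k
  proof (induction k)
    case 0
    have "tr 0 = 0 \<cdot>\<^sub>v tr 0" by (intro eq_vecI) (auto simp: tr_def)
    hence "f (tr 0) = 0 * f (tr 0)" using smul[OF trc] by metis
    thus ?case by simp
  next
    case (Suc k)
    hence k: "k < N" by simp
    have "tr (Suc k) = tr k + z$k \<cdot>\<^sub>v unit_vec N k"
      by (intro eq_vecI) (auto simp: tr_def k, metis less_antisym)
    hence "f (tr (Suc k)) = f (tr k) + z$k * f (unit_vec N k)"
      using add[of "tr k" "z$k \<cdot>\<^sub>v unit_vec N k"] smul[of "unit_vec N k" "z$k"] trc[of k] by simp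
    thus ?case using Suc by simp
  qed
  moreover have "tr N = z" using z by (intro eq_vecI) (auto simp: tr_def)
  ultimately show ?thesis by auto
qed

lemma self_dot: "(v :: real vec) \<in> carrier_vec n \<Longrightarrow> v \<bullet> v = (\<Sum>i<n. (v$i)^2)"
  by (simp add: dot_sum power2_eq_square)

lemma self_dot_nonneg: "v \<bullet> v \<ge> (0::real)"
  by (simp add: scalar_prod_def sum_nonneg)

lemma entry_sq_le: assumes v: "v \<in> carrier_vec n" and i: "i < n"
  shows "(v$i)^2 \<le> v \<bullet> (v :: real vec)"
proof -
  have "(v$i)^2 \<le> (\<Sum>j<n. (v$j)^2)" using i by (intro member_le_sum) auto
  thus ?thesis using self_dot[OF v] by simp
qed

lemma entry_abs_le: assumes v: "v \<in> carrier_vec n" and i: "i < n"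
  shows "\<bar>v$i\<bar> \<le> sqrt (v \<bullet> (v :: real vec))"
proof -
  have "sqrt ((v$i)^2) \<le> sqrt (v \<bullet> v)" using entry_sq_le[OF v i] by (rule real_sqrt_le_mono)
  thus ?thesis by (simp only: real_sqrt_abs)
qed

definition mb :: "real mat \<Rightarrow> real" where
  "mb M = (\<Sum>i<dim_row M. (\<Sum>j<dim_col M. \<bar>M$$(i,j)\<bar>)^2)"

lemma mb_nonneg: "mb M \<ge> 0" by (simp add: mb_def sum_nonneg)

lemma mv_abs: assumes M: "M \<in> carrier_mat r c" and v: "v \<in> carrier_vec c" and i: "i < r"
  shows "\<bar>(M *\<^sub>v v) $ i\<bar> \<le> (\<Sum>j<c. \<bar>M$$(i,j)\<bar>) * sqrt (v \<bullet> v)"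
proof -
  have e: "(M *\<^sub>v v) $ i = (\<Sum>j<c. M$$(i,j) * v$j)"
    using M v i by (auto simp: scalar_prod_def row_def atLeast0LessThan)
  have "\<bar>\<Sum>j<c. M$$(i,j) * v$j\<bar> \<le> (\<Sum>j<c. \<bar>M$$(i,j) * v$j\<bar>)" by (rule sum_abs)
  also have "\<dots> \<le> (\<Sum>j<c. \<bar>M$$(i,j)\<bar> * sqrt (v \<bullet> v))"
  proof (rule sum_mono)
    fix j assume "j \<in> {..<c}"
    hence "\<bar>v$j\<bar> \<le> sqrt (v \<bullet> v)" using entry_abs_le[OF v] by simp
    thus "\<bar>M$$(i,j) * v$j\<bar> \<le> \<bar>M$$(i,j)\<bar> * sqrt (v \<bullet> v)"
      unfolding abs_mult by (rule mult_left_mono) simp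
  qed
  finally show ?thesis unfolding e by (simp add: sum_distrib_right)
qed

lemma mv_sq: assumes M: "M \<in> carrier_mat r c" and v: "v \<in> carrier_vec c"
  shows "(M *\<^sub>v v) \<bullet> (M *\<^sub>v v) \<le> mb M * (v \<bullet> v)"
proof -
  have Mv: "M *\<^sub>v v \<in> carrier_vec r" using M by (intro carrier_vecI) simp
  have "(M *\<^sub>v v) \<bullet> (M *\<^sub>v v) = (\<Sum>i<r. ((M *\<^sub>v v) $ i)^2)" by (rule self_dot[OF Mv])
  also have "\<dots> \<le> (\<Sum>i<r. ((\<Sum>j<c. \<bar>M$$(i,j)\<bar>) * sqrt (v \<bullet> v))^2)"
  proof (rule sum_mono)
    fix i assume "i \<in> {..<r}"
    hence h: "\<bar>(M *\<^sub>v v) $ i\<bar> \<le> (\<Sum>j<c. \<bar>M$$(i,j)\<bar>) * sqrt (v \<bullet> v)" using mv_abs[OF M v] by simp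
    have "\<bar>(M *\<^sub>v v) $ i\<bar>^2 \<le> ((\<Sum>j<c. \<bar>M$$(i,j)\<bar>) * sqrt (v \<bullet> v))^2"
      by (rule power_mono[OF h abs_ge_zero])
    thus "((M *\<^sub>v v) $ i)^2 \<le> ((\<Sum>j<c. \<bar>M$$(i,j)\<bar>) * sqrt (v \<bullet> v))^2"
      by (simp only: power2_abs)
  qed
  also have "\<dots> = (\<Sum>i<r. (\<Sum>j<c. \<bar>M$$(i,j)\<bar>)^2 * (v \<bullet> v))"
  proof (rule sum.cong[OF refl])
    fix i
    have "sqrt (v \<bullet> v) ^ 2 = v \<bullet> v" using self_dot_nonneg[of v] by (rule real_sqrt_pow2)
    thus "((\<Sum>j<c. \<bar>M$$(i,j)\<bar>) * sqrt (v \<bullet> v))^2 = (\<Sum>j<c. \<bar>M$$(i,j)\<bar>)^2 * (v \<bullet> v)"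
      by (simp only: power_mult_distrib)
  qed
  also have "\<dots> = mb M * (v \<bullet> v)"
    using M unfolding mb_def by (simp only: sum_distrib_right carrier_matD)
  finally show ?thesis .
qed

lemma mb_bound: assumes M: "M \<in> carrier_mat r c" and b: "\<And>i j. i < r \<Longrightarrow> j < c \<Longrightarrow> \<bar>M$$(i,j)\<bar> \<le> B"
  shows "mb M \<le> real r * (real c * B)^2"
proof -
  have "mb M = (\<Sum>i<r. (\<Sum>j<c. \<bar>M$$(i,j)\<bar>)^2)" using M unfolding mb_def by (simp only: carrier_matD)
  also have "\<dots> \<le> (\<Sum>i<r. (real c * B)^2)"
  proof (rule sum_mono)
    fix i assume i: "i \<in> {..<r}"
    have 1: "(\<Sum>j<c. \<bar>M$$(i,j)\<bar>) \<le> (\<Sum>j<c. B)" using i b by (intro sum_mono) auto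
    have 2: "0 \<le> (\<Sum>j<c. \<bar>M$$(i,j)\<bar>)" by (rule sum_nonneg) simp
    have "(\<Sum>j<c. \<bar>M$$(i,j)\<bar>)^2 \<le> (\<Sum>j<c. B)^2" by (rule power_mono[OF 1 2])
    thus "(\<Sum>j<c. \<bar>M$$(i,j)\<bar>)^2 \<le> (real c * B)^2" by simp
  qed
  also have "\<dots> = real r * (real c * B)^2" by simp
  finally show ?thesis .
qed

lemma sq2_real: "((x::real) + y)^2 \<le> 2 * x^2 + 2 * y^2"
proof -
  have "(x+y)^2 + (x-y)^2 = 2 * x^2 + 2 * y^2" by (simp add: power2_sum power2_diff)
  moreover have "(x-y)^2 \<ge> 0" by simp
  ultimately show ?thesis by linarith
qed

lemma sq3_real: "((x::real) + y + z)^2 \<le> 3 * x^2 + 3 * y^2 + 3 * z^2"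
proof -
  have "3 * x^2 + 3 * y^2 + 3 * z^2 - (x+y+z)^2 = (x-y)^2 + (y-z)^2 + (x-z)^2"
    by (simp add: power2_sum power2_diff algebra_simps)
  moreover have "(x-y)^2 + (y-z)^2 + (x-z)^2 \<ge> 0" by simp
  ultimately show ?thesis by linarith
qed

lemma sq_add2: assumes a: "a \<in> carrier_vec n" and b: "b \<in> carrier_vec n"
  shows "(a + b) \<bullet> (a + b) \<le> 2 * (a \<bullet> a) + 2 * (b \<bullet> (b :: real vec))"
proof -
  have ab: "a + b \<in> carrier_vec n" using a b by simp
  have "(a + b) \<bullet> (a + b) = (\<Sum>i<n. ((a + b)$i)^2)" by (rule self_dot[OF ab])
  also have "\<dots> = (\<Sum>i<n. (a$i + b$i)^2)" using a b by (intro sum.cong refl) simp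
  also have "\<dots> \<le> (\<Sum>i<n. 2 * (a$i)^2 + 2 * (b$i)^2)" by (rule sum_mono) (rule sq2_real)
  also have "\<dots> = 2 * (\<Sum>i<n. (a$i)^2) + 2 * (\<Sum>i<n. (b$i)^2)" by (simp only: sum.distrib sum_distrib_left)
  also have "\<dots> = 2 * (a \<bullet> a) + 2 * (b \<bullet> b)" by (simp only: self_dot[OF a] self_dot[OF b])
  finally show ?thesis .
qed

lemma sq_add3: assumes a: "a \<in> carrier_vec n" and b: "b \<in> carrier_vec n" and c: "c \<in> carrier_vec n"
  shows "(a + b + c) \<bullet> (a + b + c) \<le> 3 * (a \<bullet> a) + 3 * (b \<bullet> b) + 3 * (c \<bullet> (c :: real vec))"
proof -
  have abc: "a + b + c \<in> carrier_vec n" using a b c by simp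
  have "(a + b + c) \<bullet> (a + b + c) = (\<Sum>i<n. ((a + b + c)$i)^2)" by (rule self_dot[OF abc])
  also have "\<dots> = (\<Sum>i<n. (a$i + b$i + c$i)^2)" using a b c by (intro sum.cong refl) (simp add: add.assoc)
  also have "\<dots> \<le> (\<Sum>i<n. 3 * (a$i)^2 + 3 * (b$i)^2 + 3 * (c$i)^2)" by (rule sum_mono) (rule sq3_real)
  also have "\<dots> = 3 * (\<Sum>i<n. (a$i)^2) + 3 * (\<Sum>i<n. (b$i)^2) + 3 * (\<Sum>i<n. (c$i)^2)" by (simp only: sum.distrib sum_distrib_left)
  also have "\<dots> = 3 * (a \<bullet> a) + 3 * (b \<bullet> b) + 3 * (c \<bullet> c)" by (simp only: self_dot[OF a] self_dot[OF b] self_dot[OF c])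
  finally show ?thesis .
qed

lemma cross_gram: assumes M: "(M :: real mat) \<in> carrier_mat r c" and M': "M' \<in> carrier_mat r' c"
  and u: "u \<in> carrier_vec r" and u': "u' \<in> carrier_vec r'"
  shows "u \<bullet> ((M * M'\<^sup>T) *\<^sub>v u') = (\<Sum>j<c. (col M j \<bullet> u) * (col M' j \<bullet> u'))"
proof -
  have "u \<bullet> ((M * M'\<^sup>T) *\<^sub>v u') = u \<bullet> (M *\<^sub>v (M'\<^sup>T *\<^sub>v u'))"
    using M M' u' by (subst assoc_mult_mat_vec) auto
  also have "\<dots> = (M\<^sup>T *\<^sub>v u) \<bullet> (M'\<^sup>T *\<^sub>v u')"
    using M M' u u' by (subst transpose_vec_mult_scalar[symmetric, of M r c]) auto
  also have "\<dots> = (\<Sum>j<c. (M\<^sup>T *\<^sub>v u) $ j * (M'\<^sup>T *\<^sub>v u') $ j)"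
  proof -
    have "M'\<^sup>T *\<^sub>v u' \<in> carrier_vec c" using M' by (intro carrier_vecI) simp
    thus ?thesis by (rule dot_sum)
  qed
  also have "\<dots> = (\<Sum>j<c. (col M j \<bullet> u) * (col M' j \<bullet> u'))"
  proof (rule sum.cong[OF refl])
    fix j assume "j \<in> {..<c}"
    hence j: "j < c" by simp
    have "(M\<^sup>T *\<^sub>v u) $ j = col M j \<bullet> u" using j M by (simp add: row_transpose)
    moreover have "(M'\<^sup>T *\<^sub>v u') $ j = col M' j \<bullet> u'" using j M' by (simp add: row_transpose)
    ultimately show "(M\<^sup>T *\<^sub>v u) $ j * (M'\<^sup>T *\<^sub>v u') $ j = (col M j \<bullet> u) * (col M' j \<bullet> u')" by simp
  qed
  finally show ?thesis .
qed

lemma gram: assumes M: "(M :: real mat) \<in> carrier_mat r c" and u: "u \<in> carrier_vec r"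
  shows "u \<bullet> ((M * M\<^sup>T) *\<^sub>v u) = (\<Sum>j<c. (col M j \<bullet> u)^2)"
  using cross_gram[OF M M u u] by (simp add: power2_eq_square)

lemma divmod_blk: assumes "i < (N::nat)" shows "(b*N+i) div N = b" "(b*N+i) mod N = i"
  using assms by auto

lemma blk_lt: assumes "i < (N::nat)" "b < k" shows "b*N+i < k*N"
proof -
  have "b*N+i < Suc b * N" using assms(1) by simp
  also have "Suc b * N \<le> k * N" using assms(2) by (intro mult_le_mono1) simp
  finally show ?thesis .
qed

lemma block3_entry: assumes "i < N" "j < N" "bi < 3" "bj < 3"
  shows "block3 N M $$ (bi*N+i, bj*N+j) = M bi bj $$ (i,j)"
proof -
  have "bi*N+i < 3*N" using blk_lt assms(1,3) .
  moreover have "bj*N+j < 3*N" using blk_lt assms(2,4) .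
  ultimately show ?thesis unfolding block3_def using divmod_blk[OF assms(1)] divmod_blk[OF assms(2)] by simp
qed

lemma block3_qf:
  assumes M: "\<And>i j. i < 3 \<Longrightarrow> j < 3 \<Longrightarrow> M i j \<in> carrier_mat N N"
  and w: "w \<in> carrier_vec (3*N)"
  shows "w \<bullet> (block3 N M *\<^sub>v w) = (\<Sum>(bi::nat)<3. \<Sum>(bj::nat)<3.
     vec N (\<lambda>i. w$(bi*N+i)) \<bullet> (M bi bj *\<^sub>v vec N (\<lambda>j. w$(bj*N+j))))"
proof -
  have B: "block3 N M \<in> carrier_mat (3*N) (3*N)" by (simp add: block3_def)
  have "w \<bullet> (block3 N M *\<^sub>v w) = (\<Sum>i<3*N. \<Sum>j<3*N. w$i * block3 N M $$ (i,j) * w$j)"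
    by (rule bil_sum[OF B w w])
  also have "\<dots> = (\<Sum>(bi::nat)<3. \<Sum>i<N. \<Sum>(bj::nat)<3. \<Sum>j<N. w$(bi*N+i) * block3 N M $$ (bi*N+i,bj*N+j) * w$(bj*N+j))"
    by (simp only: sum_split_mult)
  also have "\<dots> = (\<Sum>(bi::nat)<3. \<Sum>(bj::nat)<3. \<Sum>i<N. \<Sum>j<N. w$(bi*N+i) * block3 N M $$ (bi*N+i,bj*N+j) * w$(bj*N+j))"
    by (rule sum.cong[OF refl], rule sum.swap)
  also have "\<dots> = (\<Sum>(bi::nat)<3. \<Sum>(bj::nat)<3.
     vec N (\<lambda>i. w$(bi*N+i)) \<bullet> (M bi bj *\<^sub>v vec N (\<lambda>j. w$(bj*N+j))))"
  proof (rule sum.cong[OF refl], rule sum.cong[OF refl])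
    fix bi bj :: nat assume bi: "bi \<in> {..<3}" and bj: "bj \<in> {..<3}"
    have Mb: "M bi bj \<in> carrier_mat N N" using M bi bj by simp
    have "vec N (\<lambda>i. w$(bi*N+i)) \<bullet> (M bi bj *\<^sub>v vec N (\<lambda>j. w$(bj*N+j))) =
      (\<Sum>i<N. \<Sum>j<N. vec N (\<lambda>i. w$(bi*N+i)) $ i * M bi bj $$ (i,j) * vec N (\<lambda>j. w$(bj*N+j)) $ j)"
      by (rule bil_sum[OF Mb]) simp_all
    also have "\<dots> = (\<Sum>i<N. \<Sum>j<N. w$(bi*N+i) * block3 N M $$ (bi*N+i,bj*N+j) * w$(bj*N+j))"
      using bi bj by (intro sum.cong refl) (simp add: block3_entry)
    finally show "(\<Sum>i<N. \<Sum>j<N. w$(bi*N+i) * block3 N M $$ (bi*N+i,bj*N+j) * w$(bj*N+j)) =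
       vec N (\<lambda>i. w$(bi*N+i)) \<bullet> (M bi bj *\<^sub>v vec N (\<lambda>j. w$(bj*N+j)))" by simp
  qed
  finally show ?thesis .
qed

lemma add4_vec: assumes "a \<in> carrier_vec n" "b \<in> carrier_vec n" "c \<in> carrier_vec n" "d \<in> carrier_vec n"
  shows "(a + b) + (c + d) = (a + c) + (b + (d :: 'a :: comm_monoid_add vec))"
  using assms by (intro eq_vecI) (simp_all add: ac_simps)

lemma blk_lt2: assumes "i < (m::nat)" "k < l" shows "k*m+i < m*l"
proof -
  have "k*m+i < Suc k * m" using assms(1) by simp
  also have "Suc k * m \<le> l * m" using assms(2) by (intro mult_le_mono1) simp
  finally show ?thesis by (simp add: mult.commute)
qed

locale augsys =
  fixes As Bs Cs Aa Ba Ca :: "real mat" and n na m p l :: nat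
  assumes As: "As \<in> carrier_mat n n" and Bs: "Bs \<in> carrier_mat n m" and Cs: "Cs \<in> carrier_mat p n"
  and Aa: "Aa \<in> carrier_mat na na" and Ba: "Ba \<in> carrier_mat na m" and Ca: "Ca \<in> carrier_mat p na"
  and dimeq: "n + na = p*l"
begin

definition "NN = p*l + m*l"
definition "zx z = vec n (\<lambda>i. z$i)"
definition "zxa z = vec na (\<lambda>i. z$(n+i))"
definition "zu z k = vec m (\<lambda>i. z$(p*l + k*m + i))"

primrec trx :: "real vec \<Rightarrow> nat \<Rightarrow> real vec" where
  "trx z 0 = zx z" | "trx z (Suc k) = As *\<^sub>v trx z k + Bs *\<^sub>v zu z k"
primrec tra :: "real vec \<Rightarrow> nat \<Rightarrow> real vec" where
  "tra z 0 = zxa z" | "tra z (Suc k) = Aa *\<^sub>v tra z k + Ba *\<^sub>v zu z k"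

definition "yt z k = Cs *\<^sub>v trx z k + Ca *\<^sub>v tra z k"
definition "win z = stack_yu p m l (yt z) (zu z) 0"
definition "Wm = mat NN NN (\<lambda>(i,j). win (unit_vec NN j) $ i)"
definition "Exm = mat n NN (\<lambda>(i,j). trx (unit_vec NN j) l $ i)"
definition "Eam = mat na NN (\<lambda>(i,j). tra (unit_vec NN j) l $ i)"
definition "zof x xa u s = vec NN (\<lambda>i. if i < n then x s $ i else if i < p*l then xa s $ (i-n)
    else u (s + (i - p*l) div m) $ ((i - p*l) mod m))"

lemma zx_c[simp]: "zx z \<in> carrier_vec n" by (simp add: zx_def)
lemma zxa_c[simp]: "zxa z \<in> carrier_vec na" by (simp add: zxa_def)
lemma zu_c[simp]: "zu z k \<in> carrier_vec m" by (simp add: zu_def)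
lemma trx_c[simp]: "trx z k \<in> carrier_vec n"
  by (induction k) (use As Bs in auto)
lemma tra_c[simp]: "tra z k \<in> carrier_vec na"
  by (induction k) (use Aa Ba in auto)
lemma yt_c[simp]: "yt z k \<in> carrier_vec p"
  unfolding yt_def using Cs Ca by simp

lemma dims_simp[simp]: "dim_vec (yt z k) = p" "dim_vec (trx z k) = n" "dim_vec (tra z k) = na"
  "dim_vec (zu z k) = m" "dim_vec (zx z) = n" "dim_vec (zxa z) = na"
  using yt_c[of z k] trx_c[of z k] tra_c[of z k] by (auto simp: zu_def zx_def zxa_def)

lemma n_le: "n \<le> NN" using dimeq by (simp add: NN_def)

lemma zx_add: "x \<in> carrier_vec NN \<Longrightarrow> y \<in> carrier_vec NN \<Longrightarrow> zx (x + y) = zx x + zx y"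
  using n_le by (intro eq_vecI) (auto simp: zx_def)
lemma zxa_add: "x \<in> carrier_vec NN \<Longrightarrow> y \<in> carrier_vec NN \<Longrightarrow> zxa (x + y) = zxa x + zxa y"
  using dimeq by (intro eq_vecI) (auto simp: zxa_def NN_def)
lemma zu_add: assumes "x \<in> carrier_vec NN" "y \<in> carrier_vec NN" "k < l"
  shows "zu (x + y) k = zu x k + zu y k"
proof (intro eq_vecI)
  fix i assume "i < dim_vec (zu x k + zu y k)"
  hence i: "i < m" by (simp add: zu_def)
  have "p*l + k*m + i < NN" using blk_lt2[OF i assms(3)] by (simp add: NN_def)
  thus "zu (x + y) k $ i = (zu x k + zu y k) $ i" using assms i by (simp add: zu_def)
qed (simp add: zu_def)
lemma zx_smult: "x \<in> carrier_vec NN \<Longrightarrow> zx (c \<cdot>\<^sub>v x) = c \<cdot>\<^sub>v zx x"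
  using n_le by (intro eq_vecI) (auto simp: zx_def)
lemma zxa_smult: "x \<in> carrier_vec NN \<Longrightarrow> zxa (c \<cdot>\<^sub>v x) = c \<cdot>\<^sub>v zxa x"
  using dimeq by (intro eq_vecI) (auto simp: zxa_def NN_def)
lemma zu_smult: assumes "x \<in> carrier_vec NN" "k < l"
  shows "zu (c \<cdot>\<^sub>v x) k = c \<cdot>\<^sub>v zu x k"
proof (intro eq_vecI)
  fix i assume "i < dim_vec (c \<cdot>\<^sub>v zu x k)"
  hence i: "i < m" by (simp add: zu_def)
  have "p*l + k*m + i < NN" using blk_lt2[OF i assms(2)] by (simp add: NN_def)
  thus "zu (c \<cdot>\<^sub>v x) k $ i = (c \<cdot>\<^sub>v zu x k) $ i" using assms i by (simp add: zu_def)
qed (simp add: zu_def)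

lemma tr_add: assumes x: "x \<in> carrier_vec NN" and y: "y \<in> carrier_vec NN"
  shows "k \<le> l \<Longrightarrow> trx (x + y) k = trx x k + trx y k \<and> tra (x + y) k = tra x k + tra y k"
proof (induction k)
  case 0 thus ?case using zx_add[OF x y] zxa_add[OF x y] by simp
next
  case (Suc k)
  hence k: "k < l" and IH: "trx (x + y) k = trx x k + trx y k" "tra (x + y) k = tra x k + tra y k" by auto
  have 1: "trx (x + y) (Suc k) = trx x (Suc k) + trx y (Suc k)"
    using As Bs by (simp add: IH zu_add[OF x y k] mult_add_distrib_mat_vec[of _ n n] mult_add_distrib_mat_vec[of _ n m] add4_vec[of _ n])
  have 2: "tra (x + y) (Suc k) = tra x (Suc k) + tra y (Suc k)"
    using Aa Ba by (simp add: IH zu_add[OF x y k] mult_add_distrib_mat_vec[of _ na na] mult_add_distrib_mat_vec[of _ na m] add4_vec[of _ na])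
  show ?case using 1 2 by simp
qed

lemma tr_smult: assumes x: "x \<in> carrier_vec NN"
  shows "k \<le> l \<Longrightarrow> trx (c \<cdot>\<^sub>v x) k = c \<cdot>\<^sub>v trx x k \<and> tra (c \<cdot>\<^sub>v x) k = c \<cdot>\<^sub>v tra x k"
proof (induction k)
  case 0 thus ?case using zx_smult[OF x] zxa_smult[OF x] by simp
next
  case (Suc k)
  hence k: "k < l" and IH: "trx (c \<cdot>\<^sub>v x) k = c \<cdot>\<^sub>v trx x k" "tra (c \<cdot>\<^sub>v x) k = c \<cdot>\<^sub>v tra x k" by auto
  have 1: "trx (c \<cdot>\<^sub>v x) (Suc k) = c \<cdot>\<^sub>v trx x (Suc k)"
    using As Bs by (simp add: IH zu_smult[OF x k] mult_mat_vec[of _ n n] mult_mat_vec[of _ n m] smult_add_distrib_vec[of _ n])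
  have 2: "tra (c \<cdot>\<^sub>v x) (Suc k) = c \<cdot>\<^sub>v tra x (Suc k)"
    using Aa Ba by (simp add: IH zu_smult[OF x k] mult_mat_vec[of _ na na] mult_mat_vec[of _ na m] smult_add_distrib_vec[of _ na])
  show ?case using 1 2 by simp
qed

lemma yt_add: "x \<in> carrier_vec NN \<Longrightarrow> y \<in> carrier_vec NN \<Longrightarrow> k \<le> l \<Longrightarrow> yt (x + y) k = yt x k + yt y k"
  unfolding yt_def using tr_add[of x y k] Cs Ca
  by (simp add: mult_add_distrib_mat_vec[of _ p n] mult_add_distrib_mat_vec[of _ p na] add4_vec[of _ p])

lemma yt_smult: "x \<in> carrier_vec NN \<Longrightarrow> k \<le> l \<Longrightarrow> yt (c \<cdot>\<^sub>v x) k = c \<cdot>\<^sub>v yt x k"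
  unfolding yt_def using tr_smult[of x k c] Cs Ca
  by (simp add: mult_mat_vec[of _ p n] mult_mat_vec[of _ p na] smult_add_distrib_vec[of _ p])

lemma div_p_lt: "i < p*l \<Longrightarrow> i div p < l"
  by (simp add: less_mult_imp_div_less mult.commute)

lemma stack_idx: assumes "i < NN" "\<not> i < p*l" shows "(i - p*l) div m < l" "(i - p*l) mod m < m"
proof -
  have "i - p*l < m*l" using assms by (simp add: NN_def)
  thus "(i - p*l) div m < l" by (simp add: less_mult_imp_div_less mult.commute)
  from \<open>i - p*l < m*l\<close> have "m > 0" by (cases m) auto
  thus "(i - p*l) mod m < m" by simp
qed

lemma win_add: assumes x: "x \<in> carrier_vec NN" and y: "y \<in> carrier_vec NN" and i: "i < NN"
  shows "win (x + y) $ i = win x $ i + win y $ i"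
proof (cases "i < p*l")
  case True
  have "i div p \<le> l" using div_p_lt[OF True] by simp
  moreover have "i mod p < p" using True by (cases p) auto
  ultimately show ?thesis using True i yt_add[OF x y] yt_c[of x "i div p"] yt_c[of y "i div p"]
    by (simp add: win_def stack_yu_def NN_def[symmetric] div_p_lt)
next
  case False
  note st = stack_idx[OF i False]
  show ?thesis using False i zu_add[OF x y st(1)] st
    by (simp add: win_def stack_yu_def NN_def[symmetric])
qed

lemma win_smult: assumes x: "x \<in> carrier_vec NN" and i: "i < NN"
  shows "win (c \<cdot>\<^sub>v x) $ i = c * win x $ i"
proof (cases "i < p*l")
  case True
  have "i div p \<le> l" using div_p_lt[OF True] by simp
  moreover have "i mod p < p" using True by (cases p) auto
  ultimately show ?thesis using True i yt_smult[OF x] yt_c[of x "i div p"]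
    by (simp add: win_def stack_yu_def NN_def[symmetric] div_p_lt)
next
  case False
  note st = stack_idx[OF i False]
  show ?thesis using False i zu_smult[OF x st(1)] st
    by (simp add: win_def stack_yu_def NN_def[symmetric])
qed

lemma Wm_c: "Wm \<in> carrier_mat NN NN" by (simp add: Wm_def)
lemma Exm_c: "Exm \<in> carrier_mat n NN" by (simp add: Exm_def)
lemma Eam_c: "Eam \<in> carrier_mat na NN" by (simp add: Eam_def)

lemma win_c: "win z \<in> carrier_vec NN" by (simp add: win_def stack_yu_def NN_def)

lemma Wm_mult: assumes z: "z \<in> carrier_vec NN" shows "Wm *\<^sub>v z = win z"
proof (rule eq_vecI)
  fix i assume "i < dim_vec (win z)"
  hence i: "i < NN" by (simp add: win_def stack_yu_def NN_def)
  have "win z $ i = (\<Sum>j<NN. z$j * win (unit_vec NN j) $ i)"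
    by (rule lin_rep[where f = "\<lambda>z. win z $ i"]) (use win_add win_smult i z in auto)
  moreover have "(Wm *\<^sub>v z) $ i = (\<Sum>j<NN. win (unit_vec NN j) $ i * z$j)"
    using i z by (simp add: Wm_def scalar_prod_def row_def atLeast0LessThan)
  ultimately show "(Wm *\<^sub>v z) $ i = win z $ i" by (simp add: mult.commute)
qed (simp add: Wm_def win_def stack_yu_def NN_def)

lemma Exm_mult: assumes z: "z \<in> carrier_vec NN" shows "Exm *\<^sub>v z = trx z l"
proof (rule eq_vecI)
  fix i assume "i < dim_vec (trx z l)"
  hence i: "i < n" using trx_c[of z l] by simp
  have "trx z l $ i = (\<Sum>j<NN. z$j * trx (unit_vec NN j) l $ i)"
  proof (rule lin_rep[where f = "\<lambda>z. trx z l $ i"])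
    fix x y :: "real vec" assume "x \<in> carrier_vec NN" "y \<in> carrier_vec NN"
    thus "trx (x + y) l $ i = trx x l $ i + trx y l $ i" using tr_add[of x y l] i by simp
  next
    fix c and x :: "real vec" assume "x \<in> carrier_vec NN"
    thus "trx (c \<cdot>\<^sub>v x) l $ i = c * trx x l $ i" using tr_smult[of x l c] i by simp
  qed (rule z)
  moreover have "(Exm *\<^sub>v z) $ i = (\<Sum>j<NN. trx (unit_vec NN j) l $ i * z$j)"
    using i z by (simp add: Exm_def scalar_prod_def row_def atLeast0LessThan)
  ultimately show "(Exm *\<^sub>v z) $ i = trx z l $ i" by (simp add: mult.commute)
qed (simp add: Exm_def)

lemma Eam_mult: assumes z: "z \<in> carrier_vec NN" shows "Eam *\<^sub>v z = tra z l"
proof (rule eq_vecI)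
  fix i assume "i < dim_vec (tra z l)"
  hence i: "i < na" using tra_c[of z l] by simp
  have "tra z l $ i = (\<Sum>j<NN. z$j * tra (unit_vec NN j) l $ i)"
  proof (rule lin_rep[where f = "\<lambda>z. tra z l $ i"])
    fix x y :: "real vec" assume "x \<in> carrier_vec NN" "y \<in> carrier_vec NN"
    thus "tra (x + y) l $ i = tra x l $ i + tra y l $ i" using tr_add[of x y l] i by simp
  next
    fix c and x :: "real vec" assume "x \<in> carrier_vec NN"
    thus "tra (c \<cdot>\<^sub>v x) l $ i = c * tra x l $ i" using tr_smult[of x l c] i by simp
  qed (rule z)
  moreover have "(Eam *\<^sub>v z) $ i = (\<Sum>j<NN. tra (unit_vec NN j) l $ i * z$j)"
    using i z by (simp add: Eam_def scalar_prod_def row_def atLeast0LessThan)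
  ultimately show "(Eam *\<^sub>v z) $ i = tra z l $ i" by (simp add: mult.commute)
qed (simp add: Eam_def)

end

context augsys begin

lemma zof_c: "zof x xa u s \<in> carrier_vec NN" by (simp add: zof_def)

lemma traj_match:
  assumes x: "\<And>k. s \<le> k \<Longrightarrow> k < s + l \<Longrightarrow> x (Suc k) = As *\<^sub>v x k + Bs *\<^sub>v u k"
  and xa: "\<And>k. s \<le> k \<Longrightarrow> k < s + l \<Longrightarrow> xa (Suc k) = Aa *\<^sub>v xa k + Ba *\<^sub>v u k"
  and xs: "x s \<in> carrier_vec n" and xas: "xa s \<in> carrier_vec na"
  and uc: "\<And>k. s \<le> k \<Longrightarrow> k < s + l \<Longrightarrow> u k \<in> carrier_vec m"
  shows "k \<le> l \<Longrightarrow> trx (zof x xa u s) k = x (s+k) \<and> tra (zof x xa u s) k = xa (s+k)"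
    and "win (zof x xa u s) = stack_yu p m l (\<lambda>k. Cs *\<^sub>v x k + Ca *\<^sub>v xa k) u s"
proof -
  define z where "z = zof x xa u s"
  have zx: "zx z = x s"
  proof (rule eq_vecI)
    fix i assume "i < dim_vec (x s)"
    hence i: "i < n" using xs by simp
    thus "zx z $ i = x s $ i" using n_le by (simp add: zx_def z_def zof_def)
  qed (use xs in simp)
  have zxa: "zxa z = xa s"
  proof (rule eq_vecI)
    fix i assume "i < dim_vec (xa s)"
    hence i: "i < na" using xas by simp
    thus "zxa z $ i = xa s $ i" using dimeq by (simp add: zxa_def z_def zof_def NN_def)
  qed (use xas in simp)
  have zu: "zu z k = u (s+k)" if k: "k < l" for k
  proof (rule eq_vecI)
    fix i assume "i < dim_vec (u (s+k))"
    hence i: "i < m" using uc[of "s+k"] k by simp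
    have lt: "p*l + k*m + i < NN" using blk_lt2[OF i k] by (simp add: NN_def)
    have "(k*m + i) div m = k" "(k*m+i) mod m = i" using i by auto
    thus "zu z k $ i = u (s+k) $ i" using i lt dimeq by (simp add: zu_def z_def zof_def)
  qed (use uc[of "s+k"] k in simp)
  have tr: "trx z k = x (s+k) \<and> tra z k = xa (s+k)" if "k \<le> l" for k
    using that
  proof (induction k)
    case 0 thus ?case using zx zxa by simp
  next
    case (Suc k)
    hence k: "k < l" by simp
    with Suc have IH: "trx z k = x (s+k)" "tra z k = xa (s+k)" by auto
    show ?case using IH zu[OF k] x[of "s+k"] xa[of "s+k"] k by simp
  qed
  thus "k \<le> l \<Longrightarrow> trx (zof x xa u s) k = x (s+k) \<and> tra (zof x xa u s) k = xa (s+k)"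
    by (simp add: z_def)
  show "win (zof x xa u s) = stack_yu p m l (\<lambda>k. Cs *\<^sub>v x k + Ca *\<^sub>v xa k) u s"
  proof (rule eq_vecI)
    fix i assume "i < dim_vec (stack_yu p m l (\<lambda>k. Cs *\<^sub>v x k + Ca *\<^sub>v xa k) u s)"
    hence i: "i < NN" by (simp add: stack_yu_def NN_def)
    show "win (zof x xa u s) $ i = stack_yu p m l (\<lambda>k. Cs *\<^sub>v x k + Ca *\<^sub>v xa k) u s $ i"
    proof (cases "i < p*l")
      case True
      have "i div p < l" using div_p_lt[OF True] .
      hence "trx z (i div p) = x (s + i div p)" "tra z (i div p) = xa (s + i div p)" using tr by auto
      thus ?thesis using True i by (simp add: win_def stack_yu_def NN_def[symmetric] yt_def z_def)
    next
      case False
      note st = stack_idx[OF i False]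
      show ?thesis using False i zu[OF st(1)] by (simp add: win_def stack_yu_def NN_def[symmetric] z_def)
    qed
  qed (simp add: win_def stack_yu_def NN_def)
qed

lemma win_eq:
  assumes x: "\<And>k. s \<le> k \<Longrightarrow> k < s + l \<Longrightarrow> x (Suc k) = As *\<^sub>v x k + Bs *\<^sub>v u k"
  and xa: "\<And>k. s \<le> k \<Longrightarrow> k < s + l \<Longrightarrow> xa (Suc k) = Aa *\<^sub>v xa k + Ba *\<^sub>v u k"
  and xs: "x s \<in> carrier_vec n" and xas: "xa s \<in> carrier_vec na"
  and uc: "\<And>k. s \<le> k \<Longrightarrow> k < s + l \<Longrightarrow> u k \<in> carrier_vec m"
  shows "stack_yu p m l (\<lambda>k. Cs *\<^sub>v x k + Ca *\<^sub>v xa k) u s = Wm *\<^sub>v zof x xa u s"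
  using traj_match(2)[OF assms] Wm_mult[OF zof_c] by simp

lemma arx:
  assumes Wi: "Wi \<in> carrier_mat NN NN" "Wi * Wm = 1\<^sub>m NN"
  and x: "\<And>k. s \<le> k \<Longrightarrow> k < s + l \<Longrightarrow> x (Suc k) = As *\<^sub>v x k + Bs *\<^sub>v u k"
  and xa: "\<And>k. s \<le> k \<Longrightarrow> k < s + l \<Longrightarrow> xa (Suc k) = Aa *\<^sub>v xa k + Ba *\<^sub>v u k"
  and xs: "x s \<in> carrier_vec n" and xas: "xa s \<in> carrier_vec na"
  and uc: "\<And>k. s \<le> k \<Longrightarrow> k < s + l \<Longrightarrow> u k \<in> carrier_vec m"
  shows "x (s+l) = (Exm * Wi) *\<^sub>v stack_yu p m l (\<lambda>k. Cs *\<^sub>v x k + Ca *\<^sub>v xa k) u s"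
    and "xa (s+l) = (Eam * Wi) *\<^sub>v stack_yu p m l (\<lambda>k. Cs *\<^sub>v x k + Ca *\<^sub>v xa k) u s"
proof -
  define z where "z = zof x xa u s"
  have z: "z \<in> carrier_vec NN" by (simp add: z_def zof_c)
  have st: "stack_yu p m l (\<lambda>k. Cs *\<^sub>v x k + Ca *\<^sub>v xa k) u s = Wm *\<^sub>v z"
    unfolding z_def by (rule win_eq[OF x xa xs xas uc])
  have Wz: "Wi *\<^sub>v (Wm *\<^sub>v z) = z"
    using Wi z Wm_c by (simp add: assoc_mult_mat_vec[symmetric, of Wi NN NN Wm])
  have tr: "trx z l = x (s+l)" "tra z l = xa (s+l)"
    using traj_match(1)[OF x xa xs xas uc, of l] by (auto simp: z_def)
  have WmZ: "Wm *\<^sub>v z \<in> carrier_vec NN" using Wm_c z by simp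
  show "x (s+l) = (Exm * Wi) *\<^sub>v stack_yu p m l (\<lambda>k. Cs *\<^sub>v x k + Ca *\<^sub>v xa k) u s"
    unfolding st using Exm_c Wi(1) WmZ by (simp add: assoc_mult_mat_vec Wz Exm_mult[OF z] tr)
  show "xa (s+l) = (Eam * Wi) *\<^sub>v stack_yu p m l (\<lambda>k. Cs *\<^sub>v x k + Ca *\<^sub>v xa k) u s"
    unfolding st using Eam_c Wi(1) WmZ by (simp add: assoc_mult_mat_vec Wz Eam_mult[OF z] tr)
qed

lemma wperp:
  assumes w: "w \<in> carrier_vec NN" and wt: "Wm\<^sup>T *\<^sub>v w = 0\<^sub>v NN"
  and x: "\<And>k. s \<le> k \<Longrightarrow> k < s + l \<Longrightarrow> x (Suc k) = As *\<^sub>v x k + Bs *\<^sub>v u k"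
  and xa: "\<And>k. s \<le> k \<Longrightarrow> k < s + l \<Longrightarrow> xa (Suc k) = Aa *\<^sub>v xa k + Ba *\<^sub>v u k"
  and xs: "x s \<in> carrier_vec n" and xas: "xa s \<in> carrier_vec na"
  and uc: "\<And>k. s \<le> k \<Longrightarrow> k < s + l \<Longrightarrow> u k \<in> carrier_vec m"
  shows "w \<bullet> stack_yu p m l (\<lambda>k. Cs *\<^sub>v x k + Ca *\<^sub>v xa k) u s = 0"
proof -
  have z: "zof x xa u s \<in> carrier_vec NN" by (rule zof_c)
  have "w \<bullet> (Wm *\<^sub>v zof x xa u s) = (Wm\<^sup>T *\<^sub>v w) \<bullet> zof x xa u s"
    using transpose_vec_mult_scalar[OF Wm_c z w] by simp
  also have "\<dots> = 0" using wt z by simp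
  finally show ?thesis using win_eq[OF x xa xs xas uc] by simp
qed

end

primrec xac_f :: "real mat \<Rightarrow> real mat \<Rightarrow> (nat \<Rightarrow> real vec) \<Rightarrow> (nat \<Rightarrow> real vec) \<Rightarrow> (nat \<Rightarrow> real vec) \<Rightarrow> nat \<Rightarrow> real vec" where
  "xac_f Aa Ba xam um du 0 = xam 0"
| "xac_f Aa Ba xam um du (Suc k) = Aa *\<^sub>v xac_f Aa Ba xam um du k + Ba *\<^sub>v (um k - du k)"

primrec dl_f :: "real mat \<Rightarrow> real mat \<Rightarrow> (nat \<Rightarrow> real vec) \<Rightarrow> nat \<Rightarrow> real vec" where
  "dl_f Aa Ba du 0 = 0\<^sub>v (dim_row Aa)"
| "dl_f Aa Ba du (Suc k) = Aa *\<^sub>v dl_f Aa Ba du k + Ba *\<^sub>v du k"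

lemma pow_comm: "A \<in> carrier_mat n n \<Longrightarrow> A * A ^\<^sub>m k = A ^\<^sub>m k * A"
proof (induction k)
  case 0 thus ?case by simp
next
  case (Suc k)
  have "A * A ^\<^sub>m Suc k = (A * A ^\<^sub>m k) * A" using Suc.prems by (simp add: assoc_mult_mat[of _ n n _ n _ n] pow_carrier_mat)
  also have "\<dots> = A ^\<^sub>m Suc k * A" using Suc by simp
  finally show ?case .
qed

lemma dl_c: "Aa \<in> carrier_mat na na \<Longrightarrow> Ba \<in> carrier_mat na m \<Longrightarrow> dl_f Aa Ba du k \<in> carrier_vec na"
  by (induction k) (auto intro!: carrier_vecI)

lemma dl_dya:
  assumes Aa: "Aa \<in> carrier_mat na na" and Ba: "Ba \<in> carrier_mat na m"
  and du: "\<And>j. j < k \<Longrightarrow> du j \<in> carrier_vec m"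
  shows "M \<in> carrier_mat r na \<Longrightarrow> i < r \<Longrightarrow>
    (M *\<^sub>v dl_f Aa Ba du k) $ i = (\<Sum>j<k. (M * (Aa ^\<^sub>m (k - j - 1)) * Ba *\<^sub>v du j) $ i)"
  using du
proof (induction k arbitrary: M)
  case 0 thus ?case using Aa by (simp add: scalar_prod_def)
next
  case (Suc k)
  have dlc: "dl_f Aa Ba du k \<in> carrier_vec na" using dl_c[OF Aa Ba] .
  have duk: "du k \<in> carrier_vec m" using Suc.prems by simp
  have MA: "M * Aa \<in> carrier_mat r na" using Suc.prems Aa by simp
  have "M *\<^sub>v dl_f Aa Ba du (Suc k) = (M * Aa) *\<^sub>v dl_f Aa Ba du k + (M * Ba) *\<^sub>v du k"
    using Suc.prems Aa Ba dlc duk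
    by (simp add: mult_add_distrib_mat_vec[of M r na] assoc_mult_mat_vec[of M r na _ na] assoc_mult_mat_vec[of M r na _ m])
  hence "(M *\<^sub>v dl_f Aa Ba du (Suc k)) $ i = ((M * Aa) *\<^sub>v dl_f Aa Ba du k) $ i + ((M * Ba) *\<^sub>v du k) $ i"
    using Suc.prems MA Ba by simp
  also have "((M * Aa) *\<^sub>v dl_f Aa Ba du k) $ i = (\<Sum>j<k. (M * Aa * (Aa ^\<^sub>m (k - j - 1)) * Ba *\<^sub>v du j) $ i)"
    using Suc.IH[OF MA] Suc.prems by simp
  also have "\<dots> = (\<Sum>j<k. (M * (Aa ^\<^sub>m (Suc k - j - 1)) * Ba *\<^sub>v du j) $ i)"
  proof (rule sum.cong[OF refl])
    fix j assume "j \<in> {..<k}"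
    hence e: "Suc k - j - 1 = Suc (k - j - 1)" by simp
    have "M * Aa * (Aa ^\<^sub>m (k - j - 1)) = M * (Aa * Aa ^\<^sub>m (k - j - 1))"
      using Suc.prems Aa by (simp add: assoc_mult_mat[of M r na _ na _ na] pow_carrier_mat)
    also have "\<dots> = M * (Aa ^\<^sub>m (Suc k - j - 1))" unfolding e using pow_comm[OF Aa] by simp
    finally show "(M * Aa * (Aa ^\<^sub>m (k - j - 1)) * Ba *\<^sub>v du j) $ i = (M * (Aa ^\<^sub>m (Suc k - j - 1)) * Ba *\<^sub>v du j) $ i"
      by simp
  qed
  also have "((M * Ba) *\<^sub>v du k) $ i = (M * (Aa ^\<^sub>m (Suc k - k - 1)) * Ba *\<^sub>v du k) $ i"
    using Suc.prems Aa by simp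
  finally show ?case by simp
qed

locale thm_ctx =
  fixes n m p l T :: nat
    and As Bs Cs Aa Ba Ca Th P Y :: "real mat"
    and xd xam um du dy ym :: "nat \<Rightarrow> real vec"
  assumes As: "As \<in> carrier_mat n n" and Bs: "Bs \<in> carrier_mat n m"
    and Cs: "Cs \<in> carrier_mat p n"
    and obs: "obs_index As Cs l"
    and pl: "p * l > n"
    and Aa: "Aa \<in> carrier_mat (p*l - n) (p*l - n)"
    and Ba: "Ba \<in> carrier_mat (p*l - n) m"
    and Ca: "Ca \<in> carrier_mat p (p*l - n)"
    and dims: "\<forall>k\<le>T+1. xd k \<in> carrier_vec n \<and> xam k \<in> carrier_vec (p*l - n)"
    and dims2: "\<forall>k\<le>T. um k \<in> carrier_vec m \<and> du k \<in> carrier_vec m \<and>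
                       dy k \<in> carrier_vec p \<and> ym k \<in> carrier_vec p"
    and plant: "\<forall>k\<le>T. xd (Suc k) = As *\<^sub>v xd k + Bs *\<^sub>v (um k - du k)"
    and art: "\<forall>k\<le>T. xam (Suc k) = Aa *\<^sub>v xam k + Ba *\<^sub>v um k"
    and outp: "\<forall>k\<le>T. ym k = Cs *\<^sub>v xd k + dy k + Ca *\<^sub>v xam k"
    and Th: "psd_mat Th (p + p*l + m*l)"
    and noise: "let dyaug = (\<lambda>k. dy k + dya Aa Ba Ca du k);
                    D = Delta10 p m l T dyaug du
                in psd_mat (Th - D * D\<^sup>T) (p + p*l + m*l)"
    and exc: "let Ps0 = Psi0 p m l T ym um
              in pd_mat (Ps0 * Ps0\<^sup>T - Th22 p (p*l + m*l) Th) (p*l + m*l)"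
    and P: "pd_mat P (p*l + m*l)"
    and Y: "Y \<in> carrier_mat m (p*l + m*l)"
    and LMI: "let N = p*l + m*l; Ps0 = Psi0 p m l T ym um; Ps1 = Psi1 p m l T ym um;
                  L = L_mat p m l; F = F_mat p m l; Bl = B_mat p m l;
                  Aaug = Ps0 * Ps0\<^sup>T - Th22 p N Th;
                  Baug = - (L\<^sup>T * Ps1 * Ps0\<^sup>T) + Th12 p N Th;
                  Caug = L\<^sup>T * Ps1 * Ps1\<^sup>T * L - Th11 p Th
              in nd_mat (block3 N (\<lambda>i j.
                   if i = 0 \<and> j = 0 then - P - L * Caug * L\<^sup>T
                   else if i = 0 \<and> j = 1 then F * P + Bl * Y
                   else if i = 0 \<and> j = 2 then L * Baug
                   else if i = 1 \<and> j = 0 then P * F\<^sup>T + Y\<^sup>T * Bl\<^sup>T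
                   else if i = 1 \<and> j = 1 then - P
                   else if i = 1 \<and> j = 2 then - P
                   else if i = 2 \<and> j = 0 then Baug\<^sup>T * L\<^sup>T
                   else if i = 2 \<and> j = 1 then - P
                   else - Aaug)) (3 * N)"
begin

lemma pl_pos: "p > 0" "l > 0" using pl by (cases p; cases l; auto)+

lemma dimeq: "n + (p*l - n) = p*l" using pl by simp

sublocale aug: augsys As Bs Cs Aa Ba Ca n "p*l - n" m p l
  using As Bs Cs Aa Ba Ca dimeq by unfold_locales auto

abbreviation "na \<equiv> p*l - n"
abbreviation "N \<equiv> p*l + m*l"

definition "xac = xac_f Aa Ba xam um du"
definition "dl = dl_f Aa Ba du"
definition "uc k = um k - du k"
definition "dyaug k = dy k + dya Aa Ba Ca du k"
definition "yc k = Cs *\<^sub>v xd k + Ca *\<^sub>v xac k"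

lemma NN_eq: "aug.NN = N" by (simp add: aug.NN_def)

lemma xac_c: "xac k \<in> carrier_vec na"
  unfolding xac_def using Aa Ba dims by (cases k) (auto intro!: carrier_vecI)

lemma dl_c': "dl k \<in> carrier_vec na" unfolding dl_def using dl_c[OF Aa Ba] .

lemma xam_dec: "k \<le> T+1 \<Longrightarrow> xam k = xac k + dl k"
proof (induction k)
  case 0 thus ?case using dims Aa by (intro eq_vecI) (auto simp: xac_def dl_def)
next
  case (Suc k)
  hence k: "k \<le> T" by simp
  have c: "xac k \<in> carrier_vec na" "dl k \<in> carrier_vec na" "um k \<in> carrier_vec m" "du k \<in> carrier_vec m"
    using xac_c dl_c' dims2 k by auto
  have "xam (Suc k) = Aa *\<^sub>v (xac k + dl k) + Ba *\<^sub>v um k" using art k Suc by simp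
  also have "\<dots> = xac (Suc k) + dl (Suc k)"
  proof -
    have r1: "Aa *\<^sub>v (xac k + dl k) = Aa *\<^sub>v xac k + Aa *\<^sub>v dl k"
      using mult_add_distrib_mat_vec[OF Aa c(1) c(2)] .
    have r2: "xac (Suc k) = Aa *\<^sub>v xac k + (Ba *\<^sub>v um k - Ba *\<^sub>v du k)"
      unfolding xac_def using mult_minus_distrib_mat_vec[OF Ba c(3) c(4)] by simp
    have r3: "dl (Suc k) = Aa *\<^sub>v dl k + Ba *\<^sub>v du k" by (simp add: dl_def)
    have d: "dim_row Aa = na" "dim_row Ba = na" using Aa Ba by auto
    show ?thesis unfolding r1 r2 r3 by (rule eq_vecI) (simp_all add: d)
  qed
  finally show ?case .
qed

lemma dya_eq: assumes k: "k \<le> T+1" shows "Ca *\<^sub>v dl k = dya Aa Ba Ca du k"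
proof (rule eq_vecI)
  fix i assume "i < dim_vec (dya Aa Ba Ca du k)"
  hence i: "i < p" using Ca by (simp add: dya_def)
  have du: "\<And>j. j < k \<Longrightarrow> du j \<in> carrier_vec m" using dims2 k by auto
  have "(Ca *\<^sub>v dl k) $ i = (\<Sum>j<k. (Ca * (Aa ^\<^sub>m (k - j - 1)) * Ba *\<^sub>v du j) $ i)"
    unfolding dl_def by (rule dl_dya[OF Aa Ba du Ca i])
  thus "(Ca *\<^sub>v dl k) $ i = dya Aa Ba Ca du k $ i" using i Ca by (simp add: dya_def)
qed (use Ca in \<open>simp add: dya_def\<close>)

lemma yc_c: "yc k \<in> carrier_vec p" using Cs Ca by (intro carrier_vecI) (simp add: yc_def)
lemma dyaug_c: "k \<le> T \<Longrightarrow> dyaug k \<in> carrier_vec p" using dims2 Ca by (intro carrier_vecI) (simp add: dyaug_def dya_def)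

lemma ym_dec: assumes k: "k \<le> T" shows "ym k = yc k + dyaug k"
proof -
  have xk: "xam k = xac k + dl k" using xam_dec k by simp
  have ca: "Ca *\<^sub>v (xac k + dl k) = Ca *\<^sub>v xac k + Ca *\<^sub>v dl k"
    using mult_add_distrib_mat_vec[OF Ca xac_c dl_c'] .
  have e: "ym k = Cs *\<^sub>v xd k + dy k + (Ca *\<^sub>v xac k + dya Aa Ba Ca du k)"
    using outp k xk ca dya_eq[of k] by simp
  have d: "dim_row Cs = p" "dim_row Ca = p" "dim_vec (dy k) = p" using Cs Ca dims2 k by auto
  show ?thesis unfolding e yc_def dyaug_def by (rule eq_vecI) (simp_all add: d dya_def)
qed

lemma uc_c: "k \<le> T \<Longrightarrow> uc k \<in> carrier_vec m" using dims2 by (simp add: uc_def)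

lemma stack_dec: assumes j: "j + l \<le> T"
  shows "stack_yu p m l ym um j = stack_yu p m l yc uc j + stack_yu p m l dyaug du j"
proof (rule eq_vecI)
  fix i assume "i < dim_vec (stack_yu p m l yc uc j + stack_yu p m l dyaug du j)"
  hence i: "i < N" by (simp add: stack_yu_def)
  show "stack_yu p m l ym um j $ i = (stack_yu p m l yc uc j + stack_yu p m l dyaug du j) $ i"
  proof (cases "i < p*l")
    case True
    have lt: "i div p < l" using aug.div_p_lt[OF True] .
    have mp: "i mod p < p" using pl_pos by simp
    have k: "j + i div p \<le> T" using lt j by simp
    show ?thesis using True i ym_dec[OF k] yc_c[of "j + i div p"] dyaug_c[OF k] mp by (simp add: stack_yu_def)
  next
    case False
    note st = aug.stack_idx[unfolded NN_eq, OF i False]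
    have k: "j + (i - p*l) div m \<le> T" using st j by simp
    have d: "dim_vec (du (j + (i - p*l) div m)) = m" using dims2 k by auto
    show ?thesis using False i st d by (simp add: stack_yu_def uc_def)
  qed
qed (simp add: stack_yu_def)

lemma clean:
  assumes s: "s + l \<le> T"
  shows "\<And>k. s \<le> k \<Longrightarrow> k < s + l \<Longrightarrow> xd (Suc k) = As *\<^sub>v xd k + Bs *\<^sub>v uc k"
  and "\<And>k. s \<le> k \<Longrightarrow> k < s + l \<Longrightarrow> xac (Suc k) = Aa *\<^sub>v xac k + Ba *\<^sub>v uc k"
  and "xd s \<in> carrier_vec n" and "xac s \<in> carrier_vec na"
  and "\<And>k. s \<le> k \<Longrightarrow> k < s + l \<Longrightarrow> uc k \<in> carrier_vec m"
  using plant s dims xac_c uc_c by (auto simp: uc_def xac_def)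

lemma yc_lam: "yc = (\<lambda>k. Cs *\<^sub>v xd k + Ca *\<^sub>v xac k)" by (simp add: yc_def[abs_def])

end

context thm_ctx begin

lemma NP: "p + p*l + m*l = p + N" by simp

lemma Th_c: "Th \<in> carrier_mat (p+N) (p+N)" and Th_sym: "Th\<^sup>T = Th"
  using Th unfolding psd_mat_def NP by auto

lemma Th22_c: "Th22 p N Th \<in> carrier_mat N N" by (simp add: Th22_def)

lemma split_qf:
  assumes s: "s \<in> carrier_vec p" and g: "g \<in> carrier_vec N"
  shows "vec (p+N) (\<lambda>i. if i < p then s$i else g$(i-p)) \<bullet> (Th *\<^sub>v vec (p+N) (\<lambda>i. if i < p then s$i else g$(i-p)))
    = s \<bullet> (Th11 p Th *\<^sub>v s) + 2 * (s \<bullet> (Th12 p N Th *\<^sub>v g)) + g \<bullet> (Th22 p N Th *\<^sub>v g)"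
proof -
  define v where "v = vec (p+N) (\<lambda>i. if i < p then s$i else g$(i-p))"
  have v: "v \<in> carrier_vec (p+N)" by (simp add: v_def)
  have sym: "Th $$ (p+i, k) = Th $$ (k, p+i)" if "i < N" "k < p" for i k
  proof -
    have "Th $$ (p+i, k) = Th\<^sup>T $$ (p+i, k)" using Th_sym by simp
    also have "\<dots> = Th $$ (k, p+i)" using that Th_c by simp
    finally show ?thesis .
  qed
  have "v \<bullet> (Th *\<^sub>v v) = (\<Sum>i<p+N. \<Sum>k<p+N. v$i * Th$$(i,k) * v$k)" by (rule bil_sum[OF Th_c v v])
  also have "\<dots> = (\<Sum>i<p. \<Sum>k<p. s$i * Th$$(i,k) * s$k) + (\<Sum>i<p. \<Sum>k<N. s$i * Th$$(i,p+k) * g$k)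
     + ((\<Sum>i<N. \<Sum>k<p. g$i * Th$$(p+i,k) * s$k) + (\<Sum>i<N. \<Sum>k<N. g$i * Th$$(p+i,p+k) * g$k))"
    by (simp add: sum_split_add v_def sum.distrib)
  also have "(\<Sum>i<N. \<Sum>k<p. g$i * Th$$(p+i,k) * s$k) = (\<Sum>i<p. \<Sum>k<N. s$i * Th$$(i,p+k) * g$k)"
  proof -
    have "(\<Sum>i<N. \<Sum>k<p. g$i * Th$$(p+i,k) * s$k) = (\<Sum>i<N. \<Sum>k<p. s$k * Th$$(k,p+i) * g$i)"
      by (intro sum.cong refl) (simp add: sym)
    also have "\<dots> = (\<Sum>k<p. \<Sum>i<N. s$k * Th$$(k,p+i) * g$i)" by (rule sum.swap)
    finally show ?thesis .
  qed
  also have "(\<Sum>i<p. \<Sum>k<p. s$i * Th$$(i,k) * s$k) = s \<bullet> (Th11 p Th *\<^sub>v s)"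
    by (subst bil_sum[of _ p p]) (auto simp: Th11_def s intro!: sum.cong)
  also have "(\<Sum>i<p. \<Sum>k<N. s$i * Th$$(i,p+k) * g$k) = s \<bullet> (Th12 p N Th *\<^sub>v g)"
    by (subst bil_sum[of _ p N]) (auto simp: Th12_def s g intro!: sum.cong)
  also have "(\<Sum>i<N. \<Sum>k<N. g$i * Th$$(p+i,p+k) * g$k) = g \<bullet> (Th22 p N Th *\<^sub>v g)"
    by (subst bil_sum[of _ N N]) (auto simp: Th22_def g intro!: sum.cong)
  finally show ?thesis unfolding v_def by simp
qed

lemma dot_split:
  assumes "a \<in> carrier_vec p" "s \<in> carrier_vec p" "b \<in> carrier_vec N" "g \<in> carrier_vec N"
  shows "vec (p+N) (\<lambda>i. if i < p then a$i else b$(i-p)) \<bullet> vec (p+N) (\<lambda>i. if i < p then s$i else g$(i-p))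
     = a \<bullet> s + b \<bullet> g"
  using assms by (simp add: dot_sum[of _ "p+N"] dot_sum[of _ p] dot_sum[of _ N] sum_split_add)

definition "Ps0 = Psi0 p m l T ym um"
definition "Ps1 = Psi1 p m l T ym um"
definition "D = Delta10 p m l T dyaug du"
definition "cc = T + 1 - l"

lemma Ps0_c: "Ps0 \<in> carrier_mat N cc" by (simp add: Ps0_def Psi0_def cc_def)
lemma Ps1_c: "Ps1 \<in> carrier_mat N cc" by (simp add: Ps1_def Psi1_def cc_def)
lemma D_c: "D \<in> carrier_mat (p+N) cc" unfolding D_def Delta10_def cc_def NP by simp

lemma stack_c: "stack_yu p m l y u s \<in> carrier_vec N" by (simp add: stack_yu_def)

lemma colP0: "j < cc \<Longrightarrow> col Ps0 j = stack_yu p m l ym um j"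
  by (simp add: Ps0_def Psi0_def cc_def) (intro eq_vecI, auto simp: stack_yu_def)
lemma colP1: "j < cc \<Longrightarrow> col Ps1 j = stack_yu p m l ym um (j+1)"
  by (simp add: Ps1_def Psi1_def cc_def) (intro eq_vecI, auto simp: stack_yu_def)
lemma colD: "j < cc \<Longrightarrow> col D j = vec (p+N) (\<lambda>i. if i < p then dyaug (j+l) $ i else stack_yu p m l dyaug du j $ (i-p))"
  by (simp add: D_def Delta10_def cc_def NP)

lemma cc_le: "j < cc \<Longrightarrow> j + l \<le> T" by (simp add: cc_def)

lemma nz_dot: assumes j: "j < cc" and w: "w \<in> carrier_vec N" and wt: "aug.Wm\<^sup>T *\<^sub>v w = 0\<^sub>v N"
  shows "w \<bullet> col Ps0 j = w \<bullet> stack_yu p m l dyaug du j"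
proof -
  have jl: "j + l \<le> T" using cc_le[OF j] .
  have "w \<bullet> col Ps0 j = w \<bullet> stack_yu p m l yc uc j + w \<bullet> stack_yu p m l dyaug du j"
    unfolding colP0[OF j] stack_dec[OF jl] using w stack_c by (simp add: scalar_prod_add_distrib[of _ N])
  moreover have "w \<bullet> stack_yu p m l yc uc j = 0"
    unfolding yc_lam by (rule aug.wperp[unfolded NN_eq, OF w wt clean[OF jl]])
  ultimately show ?thesis by simp
qed

lemma W_det: "det aug.Wm \<noteq> 0"
proof
  assume d0: "det aug.Wm = 0"
  have Wc: "aug.Wm \<in> carrier_mat N N" using aug.Wm_c NN_eq by simp
  have "det (aug.Wm\<^sup>T) = 0" using det_transpose[OF Wc] d0 by simp
  then obtain w where w: "w \<in> carrier_vec N" "w \<noteq> 0\<^sub>v N" "aug.Wm\<^sup>T *\<^sub>v w = 0\<^sub>v N"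
    using det_0_iff_vec_prod_zero[of "aug.Wm\<^sup>T" N] Wc by auto
  define v where "v = vec (p+N) (\<lambda>i. if i < p then (0\<^sub>v p)$i else w$(i-p))"
  have v: "v \<in> carrier_vec (p+N)" by (simp add: v_def)
  have z: "0\<^sub>v p \<in> carrier_vec p" by simp
  have cD: "col D j \<bullet> v = col Ps0 j \<bullet> w" if j: "j < cc" for j
  proof -
    have "col D j \<bullet> v = dyaug (j+l) \<bullet> 0\<^sub>v p + stack_yu p m l dyaug du j \<bullet> w"
      unfolding colD[OF j] v_def by (rule dot_split[OF dyaug_c[OF cc_le[OF j]] z stack_c w(1)])
    also have "\<dots> = w \<bullet> stack_yu p m l dyaug du j"
      using dyaug_c[of "j+l"] cc_le[OF j] w(1) stack_c by (simp add: comm_scalar_prod[of _ N])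
    also have "\<dots> = w \<bullet> col Ps0 j" using nz_dot[OF j w(1) w(3)] by simp
    also have "\<dots> = col Ps0 j \<bullet> w" using w(1) Ps0_c j by (simp add: comm_scalar_prod[of _ N])
    finally show ?thesis .
  qed
  have c1: "Th11 p Th *\<^sub>v 0\<^sub>v p \<in> carrier_vec p" by (intro carrier_vecI) (simp add: Th11_def)
  have c2: "Th12 p N Th *\<^sub>v w \<in> carrier_vec p" by (intro carrier_vecI) (simp add: Th12_def)
  have vTh: "v \<bullet> (Th *\<^sub>v v) = w \<bullet> (Th22 p N Th *\<^sub>v w)"
    using split_qf[OF z w(1)] scalar_prod_left_zero[OF c1] scalar_prod_left_zero[OF c2] unfolding v_def by simp
  have exc': "pd_mat (Ps0 * Ps0\<^sup>T - Th22 p N Th) N" using exc unfolding Let_def Ps0_def .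
  have "0 < w \<bullet> ((Ps0 * Ps0\<^sup>T - Th22 p N Th) *\<^sub>v w)" using exc' w unfolding pd_mat_def by auto
  also have "\<dots> = w \<bullet> ((Ps0 * Ps0\<^sup>T) *\<^sub>v w) - w \<bullet> (Th22 p N Th *\<^sub>v w)"
    using Ps0_c Th22_c w(1)
    by (simp add: minus_mult_distrib_mat_vec[of _ N N] scalar_prod_minus_distrib[of _ N])
  also have "w \<bullet> ((Ps0 * Ps0\<^sup>T) *\<^sub>v w) = (\<Sum>j<cc. (col Ps0 j \<bullet> w)^2)" by (rule gram[OF Ps0_c w(1)])
  finally have A: "0 < (\<Sum>j<cc. (col Ps0 j \<bullet> w)^2) - w \<bullet> (Th22 p N Th *\<^sub>v w)" .
  have noise': "psd_mat (Th - D * D\<^sup>T) (p+N)" using noise unfolding Let_def D_def dyaug_def[abs_def] NP .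
  have "0 \<le> v \<bullet> ((Th - D * D\<^sup>T) *\<^sub>v v)" using noise' v unfolding psd_mat_def by auto
  also have "\<dots> = v \<bullet> (Th *\<^sub>v v) - v \<bullet> ((D * D\<^sup>T) *\<^sub>v v)"
    using D_c Th_c v
    by (simp add: minus_mult_distrib_mat_vec[of _ "p+N" "p+N"] scalar_prod_minus_distrib[of _ "p+N"])
  also have "v \<bullet> ((D * D\<^sup>T) *\<^sub>v v) = (\<Sum>j<cc. (col D j \<bullet> v)^2)" by (rule gram[OF D_c v])
  also have "\<dots> = (\<Sum>j<cc. (col Ps0 j \<bullet> w)^2)" using cD by simp
  finally show False using A vTh by simp
qed

end

lemma mult_mat_vec_uminus: "A \<in> carrier_mat r c \<Longrightarrow> v \<in> carrier_vec c \<Longrightarrow> A *\<^sub>v (- v) = - (A *\<^sub>v (v :: real vec))"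
  by (intro eq_vecI) (auto simp: scalar_prod_uminus_right)

context thm_ctx begin

definition "Wi = the (mat_inverse aug.Wm)"

lemma Wi: "Wi \<in> carrier_mat N N" "Wi * aug.Wm = 1\<^sub>m N" "aug.Wm * Wi = 1\<^sub>m N"
proof -
  have Wc: "aug.Wm \<in> carrier_mat N N" using aug.Wm_c NN_eq by simp
  have U: "aug.Wm \<in> Units (ring_mat TYPE(real) N ())" using det_non_zero_imp_unit[OF Wc W_det] .
  have "mat_inverse aug.Wm \<noteq> None"
  proof
    assume "mat_inverse aug.Wm = None"
    from mat_inverse(1)[OF Wc this, where b = "()"] U show False by simp
  qed
  then obtain B where B: "mat_inverse aug.Wm = Some B" by auto
  from mat_inverse(2)[OF Wc B] B show "Wi \<in> carrier_mat N N" "Wi * aug.Wm = 1\<^sub>m N" "aug.Wm * Wi = 1\<^sub>m N"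
    by (auto simp: Wi_def)
qed

definition "Hx = aug.Exm * Wi"
definition "Ha = aug.Eam * Wi"
definition "G0 = Cs * Hx + Ca * Ha"

lemma Hx_c: "Hx \<in> carrier_mat n N" using aug.Exm_c Wi(1) NN_eq by (simp add: Hx_def)
lemma Ha_c: "Ha \<in> carrier_mat na N" using aug.Eam_c Wi(1) NN_eq by (simp add: Ha_def)
lemma G0_c: "G0 \<in> carrier_mat p N" using Hx_c Ha_c Cs Ca by (simp add: G0_def)

lemma arx3:
  assumes x: "\<And>k. s \<le> k \<Longrightarrow> k < s + l \<Longrightarrow> x (Suc k) = As *\<^sub>v x k + Bs *\<^sub>v u k"
  and xa: "\<And>k. s \<le> k \<Longrightarrow> k < s + l \<Longrightarrow> xa (Suc k) = Aa *\<^sub>v xa k + Ba *\<^sub>v u k"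
  and xs: "x s \<in> carrier_vec n" and xas: "xa s \<in> carrier_vec na"
  and uc: "\<And>k. s \<le> k \<Longrightarrow> k < s + l \<Longrightarrow> u k \<in> carrier_vec m"
  shows "x (s+l) = Hx *\<^sub>v stack_yu p m l (\<lambda>k. Cs *\<^sub>v x k + Ca *\<^sub>v xa k) u s"
    and "xa (s+l) = Ha *\<^sub>v stack_yu p m l (\<lambda>k. Cs *\<^sub>v x k + Ca *\<^sub>v xa k) u s"
    and "Cs *\<^sub>v x (s+l) + Ca *\<^sub>v xa (s+l) = G0 *\<^sub>v stack_yu p m l (\<lambda>k. Cs *\<^sub>v x k + Ca *\<^sub>v xa k) u s"
proof -
  have Wi': "Wi \<in> carrier_mat aug.NN aug.NN" "Wi * aug.Wm = 1\<^sub>m aug.NN" using Wi NN_eq by auto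
  note a = aug.arx[OF Wi' x xa xs xas uc]
  show 1: "x (s+l) = Hx *\<^sub>v stack_yu p m l (\<lambda>k. Cs *\<^sub>v x k + Ca *\<^sub>v xa k) u s" using a(1) by (simp add: Hx_def)
  show 2: "xa (s+l) = Ha *\<^sub>v stack_yu p m l (\<lambda>k. Cs *\<^sub>v x k + Ca *\<^sub>v xa k) u s" using a(2) by (simp add: Ha_def)
  have st: "stack_yu p m l (\<lambda>k. Cs *\<^sub>v x k + Ca *\<^sub>v xa k) u s \<in> carrier_vec N" by (rule stack_c)
  show "Cs *\<^sub>v x (s+l) + Ca *\<^sub>v xa (s+l) = G0 *\<^sub>v stack_yu p m l (\<lambda>k. Cs *\<^sub>v x k + Ca *\<^sub>v xa k) u s"
    unfolding 1 2 G0_def using Cs Ca Hx_c Ha_c st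
    by (simp add: add_mult_distrib_mat_vec[of _ p N] assoc_mult_mat_vec[of _ p n _ N] assoc_mult_mat_vec[of _ p na _ N])
qed

lemma data_arx: assumes j: "j < cc" shows "yc (j+l) = G0 *\<^sub>v stack_yu p m l yc uc j"
  using arx3(3)[OF clean[OF cc_le[OF j]]] by (simp add: yc_lam)

lemma L_c: "L_mat p m l \<in> carrier_mat N p" by (simp add: L_mat_def)

lemma Lt_mult: assumes v: "v \<in> carrier_vec N" and r: "r < p"
  shows "((L_mat p m l)\<^sup>T *\<^sub>v v) $ r = v $ (p*l - p + r)"
proof -
  have "p \<le> p*l" using pl_pos by simp
  hence lt: "p*l - p + r < N" using r by linarith
  have "((L_mat p m l)\<^sup>T *\<^sub>v v) $ r = (\<Sum>i<N. (if i = p*l - p + r then 1 else 0) * v$i)"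
    using r v by (auto simp: L_mat_def scalar_prod_def atLeast0LessThan intro!: sum.cong)
  also have "\<dots> = (\<Sum>i<N. (if i = p*l - p + r then v$i else 0))" by (intro sum.cong) auto
  also have "\<dots> = v $ (p*l - p + r)" using lt by simp
  finally show ?thesis .
qed

end

context thm_ctx begin

definition "Lm = L_mat p m l"
definition "Aaug = Ps0 * Ps0\<^sup>T - Th22 p N Th"
definition "Baug = - (Lm\<^sup>T * Ps1 * Ps0\<^sup>T) + Th12 p N Th"
definition "Caug = Lm\<^sup>T * Ps1 * Ps1\<^sup>T * Lm - Th11 p Th"

lemma Lm_c: "Lm \<in> carrier_mat N p" using L_c by (simp add: Lm_def)
lemma Th11_c: "Th11 p Th \<in> carrier_mat p p" by (simp add: Th11_def)
lemma Th12_c: "Th12 p N Th \<in> carrier_mat p N" by (simp add: Th12_def)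
lemma Aaug_c: "Aaug \<in> carrier_mat N N" using Ps0_c Th22_c unfolding Aaug_def by (intro carrier_matI) auto
lemma Baug_c: "Baug \<in> carrier_mat p N" using Ps0_c Ps1_c Lm_c Th12_c by (simp add: Baug_def)
lemma Caug_c: "Caug \<in> carrier_mat p p" using Ps1_c Lm_c Th11_c unfolding Caug_def by (intro carrier_matI) auto

lemma ym_c: "k \<le> T \<Longrightarrow> ym k \<in> carrier_vec p" using dims2 by auto

lemma colM1: assumes j: "j < cc" shows "col (Lm\<^sup>T * Ps1) j = ym (j+l)"
proof -
  have jT: "j + l \<le> T" using cc_le[OF j] .
  have "col (Lm\<^sup>T * Ps1) j = Lm\<^sup>T *\<^sub>v col Ps1 j"
    using Lm_c Ps1_c j by (intro col_mult2) auto
  also have "\<dots> = ym (j+l)"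
  proof (rule eq_vecI)
    fix r assume "r < dim_vec (ym (j+l))"
    hence r: "r < p" using ym_c[OF jT] by simp
    obtain l' where l': "l = Suc l'" using pl_pos by (cases l) auto
    have e: "p*l - p + r = l'*p + r" using l' by (simp add: algebra_simps)
    have lt: "p*l - p + r < p*l" using e l' r by simp
    have st: "col Ps1 j \<in> carrier_vec N" using Ps1_c j by simp
    have "(Lm\<^sup>T *\<^sub>v col Ps1 j) $ r = col Ps1 j $ (p*l - p + r)" using Lt_mult[OF st r] by (simp add: Lm_def)
    also have "\<dots> = ym (j + 1 + l') $ r" using lt r unfolding colP1[OF j] e by (simp add: stack_yu_def)
    finally show "(Lm\<^sup>T *\<^sub>v col Ps1 j) $ r = ym (j+l) $ r" using l' by simp
  qed (use Lm_c ym_c[OF jT] in simp)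
  finally show ?thesis .
qed

lemma Qneg: assumes s: "s \<in> carrier_vec p"
  shows "s \<bullet> (Caug *\<^sub>v s) + 2 * (s \<bullet> (Baug *\<^sub>v (G0\<^sup>T *\<^sub>v s))) + (G0\<^sup>T *\<^sub>v s) \<bullet> (Aaug *\<^sub>v (G0\<^sup>T *\<^sub>v s)) \<le> 0"
proof -
  define g where "g = G0\<^sup>T *\<^sub>v s"
  have g: "g \<in> carrier_vec N" using G0_c unfolding g_def by (intro carrier_vecI) simp
  have ng: "- g \<in> carrier_vec N" using g by simp
  define M1 where "M1 = Lm\<^sup>T * Ps1"
  have LT: "Lm\<^sup>T \<in> carrier_mat p N" using Lm_c by simp
  have M1c: "M1 \<in> carrier_mat p cc" using LT Ps1_c by (simp add: M1_def)
  define al where "al j = col M1 j \<bullet> s" for j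
  define be where "be j = col Ps0 j \<bullet> g" for j
  have M1T: "M1\<^sup>T = Ps1\<^sup>T * Lm" unfolding M1_def using transpose_mult[OF LT Ps1_c] by simp
  have e1: "Lm\<^sup>T * Ps1 * Ps1\<^sup>T * Lm = M1 * M1\<^sup>T"
    unfolding M1T M1_def[symmetric] using M1c Ps1_c Lm_c by (simp add: assoc_mult_mat[of M1 p cc _ N Lm p])
  have MM: "M1 * M1\<^sup>T \<in> carrier_mat p p" using M1c by simp
  have qC: "s \<bullet> (Caug *\<^sub>v s) = (\<Sum>j<cc. (al j)^2) - s \<bullet> (Th11 p Th *\<^sub>v s)"
  proof -
    have "Caug *\<^sub>v s = (M1 * M1\<^sup>T) *\<^sub>v s - Th11 p Th *\<^sub>v s"
      unfolding Caug_def e1 using minus_mult_distrib_mat_vec[OF MM Th11_c s] .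
    hence "s \<bullet> (Caug *\<^sub>v s) = s \<bullet> ((M1 * M1\<^sup>T) *\<^sub>v s) - s \<bullet> (Th11 p Th *\<^sub>v s)"
      using s MM Th11_c by (simp add: scalar_prod_minus_distrib[of _ p])
    thus ?thesis unfolding gram[OF M1c s] al_def by (simp add: comm_scalar_prod[of _ p] s)
  qed
  have MP: "M1 * Ps0\<^sup>T \<in> carrier_mat p N" using M1c Ps0_c by simp
  have qB: "s \<bullet> (Baug *\<^sub>v g) = - (\<Sum>j<cc. al j * be j) + s \<bullet> (Th12 p N Th *\<^sub>v g)"
  proof -
    have nM: "- (M1 * Ps0\<^sup>T) \<in> carrier_mat p N" using MP by simp
    have "Baug *\<^sub>v g = (- (M1 * Ps0\<^sup>T)) *\<^sub>v g + Th12 p N Th *\<^sub>v g"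
      unfolding Baug_def M1_def[symmetric] using add_mult_distrib_mat_vec[OF nM Th12_c g] .
    also have "(- (M1 * Ps0\<^sup>T)) *\<^sub>v g = - ((M1 * Ps0\<^sup>T) *\<^sub>v g)" by (rule uminus_mult_mat_vec) (use MP g in auto)
    finally have bg: "Baug *\<^sub>v g = - ((M1 * Ps0\<^sup>T) *\<^sub>v g) + Th12 p N Th *\<^sub>v g" .
    have "s \<bullet> (Baug *\<^sub>v g) = - (s \<bullet> ((M1 * Ps0\<^sup>T) *\<^sub>v g)) + s \<bullet> (Th12 p N Th *\<^sub>v g)"
    proof -
      have dMP: "dim_row (M1 * Ps0\<^sup>T) = p" using MP by auto
      have "s \<bullet> - ((M1 * Ps0\<^sup>T) *\<^sub>v g) = - (s \<bullet> ((M1 * Ps0\<^sup>T) *\<^sub>v g))"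
        using s dMP by (intro scalar_prod_uminus_right) simp
      moreover have "- ((M1 * Ps0\<^sup>T) *\<^sub>v g) \<in> carrier_vec p" using dMP by (intro carrier_vecI) simp
      moreover have "Th12 p N Th *\<^sub>v g \<in> carrier_vec p" using Th12_c by (intro carrier_vecI) simp
      ultimately show ?thesis using bg s by (simp add: scalar_prod_add_distrib[of _ p])
    qed
    thus ?thesis unfolding cross_gram[OF M1c Ps0_c s g] al_def be_def
      by (simp add: comm_scalar_prod[of _ p] comm_scalar_prod[of _ N] s g)
  qed
  have PP: "Ps0 * Ps0\<^sup>T \<in> carrier_mat N N" using Ps0_c by simp
  have qA: "g \<bullet> (Aaug *\<^sub>v g) = (\<Sum>j<cc. (be j)^2) - g \<bullet> (Th22 p N Th *\<^sub>v g)"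
  proof -
    have "Aaug *\<^sub>v g = (Ps0 * Ps0\<^sup>T) *\<^sub>v g - Th22 p N Th *\<^sub>v g"
      unfolding Aaug_def using minus_mult_distrib_mat_vec[OF PP Th22_c g] .
    hence "g \<bullet> (Aaug *\<^sub>v g) = g \<bullet> ((Ps0 * Ps0\<^sup>T) *\<^sub>v g) - g \<bullet> (Th22 p N Th *\<^sub>v g)"
      using g PP Th22_c by (simp add: scalar_prod_minus_distrib[of _ N])
    thus ?thesis unfolding gram[OF Ps0_c g] be_def by (simp add: comm_scalar_prod[of _ N] g)
  qed
  define v where "v = vec (p+N) (\<lambda>i. if i < p then s$i else (- g)$(i-p))"
  have v: "v \<in> carrier_vec (p+N)" by (simp add: v_def)
  have vTh: "v \<bullet> (Th *\<^sub>v v) = s \<bullet> (Th11 p Th *\<^sub>v s) - 2 * (s \<bullet> (Th12 p N Th *\<^sub>v g)) + g \<bullet> (Th22 p N Th *\<^sub>v g)"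
  proof -
    have "v \<bullet> (Th *\<^sub>v v) = s \<bullet> (Th11 p Th *\<^sub>v s) + 2 * (s \<bullet> (Th12 p N Th *\<^sub>v (- g))) + (- g) \<bullet> (Th22 p N Th *\<^sub>v (- g))"
      unfolding v_def by (rule split_qf[OF s ng])
    also have "Th12 p N Th *\<^sub>v (- g) = - (Th12 p N Th *\<^sub>v g)" by (rule mult_mat_vec_uminus[OF Th12_c g])
    also have "Th22 p N Th *\<^sub>v (- g) = - (Th22 p N Th *\<^sub>v g)" by (rule mult_mat_vec_uminus[OF Th22_c g])
    finally show ?thesis using s g Th12_c Th22_c by (simp add: scalar_prod_uminus_right scalar_prod_uminus_left)
  qed
  have dD: "col D j \<bullet> v = al j - be j" if j: "j < cc" for j
  proof -
    have jT: "j + l \<le> T" using cc_le[OF j] .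
    define nz where "nz = stack_yu p m l dyaug du j"
    define st where "st = stack_yu p m l yc uc j"
    have nzc: "nz \<in> carrier_vec N" and stc: "st \<in> carrier_vec N" by (simp_all add: nz_def st_def stack_c)
    have dyc: "dyaug (j+l) \<in> carrier_vec p" using dyaug_c[OF jT] .
    have ycc: "yc (j+l) \<in> carrier_vec p" using yc_c .
    have "col D j \<bullet> v = dyaug (j+l) \<bullet> s + nz \<bullet> (- g)"
      unfolding colD[OF j] v_def nz_def by (rule dot_split[OF dyc s stack_c ng])
    also have "\<dots> = dyaug (j+l) \<bullet> s - nz \<bullet> g" using nzc g by (simp add: scalar_prod_uminus_right)
    finally have 1: "col D j \<bullet> v = dyaug (j+l) \<bullet> s - nz \<bullet> g" .
    have "al j = ym (j+l) \<bullet> s" unfolding al_def M1_def colM1[OF j] ..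
    also have "\<dots> = yc (j+l) \<bullet> s + dyaug (j+l) \<bullet> s"
      unfolding ym_dec[OF jT] using ycc dyc s by (simp add: add_scalar_prod_distrib[of _ p])
    finally have 2: "al j = yc (j+l) \<bullet> s + dyaug (j+l) \<bullet> s" .
    have "be j = (st + nz) \<bullet> g" unfolding be_def colP0[OF j] stack_dec[OF jT] st_def nz_def ..
    also have "\<dots> = st \<bullet> g + nz \<bullet> g" using stc nzc g by (simp add: add_scalar_prod_distrib[of _ N])
    also have "st \<bullet> g = s \<bullet> (G0 *\<^sub>v st)"
      unfolding g_def using transpose_vec_mult_scalar[OF G0_c stc s] stc G0_c s by (simp add: comm_scalar_prod[of _ N])
    also have "G0 *\<^sub>v st = yc (j+l)" unfolding st_def using data_arx[OF j] by simp
    finally have 3: "be j = s \<bullet> yc (j+l) + nz \<bullet> g" .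
    show ?thesis using 1 2 3 s ycc by (simp add: comm_scalar_prod[of _ p])
  qed
  have noise': "psd_mat (Th - D * D\<^sup>T) (p+N)" using noise unfolding Let_def D_def dyaug_def[abs_def] NP .
  have "0 \<le> v \<bullet> ((Th - D * D\<^sup>T) *\<^sub>v v)" using noise' v unfolding psd_mat_def by auto
  also have "\<dots> = v \<bullet> (Th *\<^sub>v v) - v \<bullet> ((D * D\<^sup>T) *\<^sub>v v)"
    using D_c Th_c v
    by (simp add: minus_mult_distrib_mat_vec[of _ "p+N" "p+N"] scalar_prod_minus_distrib[of _ "p+N"])
  also have "v \<bullet> ((D * D\<^sup>T) *\<^sub>v v) = (\<Sum>j<cc. (col D j \<bullet> v)^2)" by (rule gram[OF D_c v])
  also have "\<dots> = (\<Sum>j<cc. (al j - be j)^2)" using dD by simp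
  also have "\<dots> = (\<Sum>j<cc. (al j)^2) - 2 * (\<Sum>j<cc. al j * be j) + (\<Sum>j<cc. (be j)^2)"
    by (simp add: power2_diff sum.distrib sum_subtractf sum_distrib_left mult.assoc)
  finally have fin: "0 \<le> v \<bullet> (Th *\<^sub>v v) - ((\<Sum>j<cc. (al j)^2) - 2 * (\<Sum>j<cc. al j * be j) + (\<Sum>j<cc. (be j)^2))" .
  show ?thesis unfolding g_def[symmetric] using qA qB qC vTh fin by linarith
qed

end

lemma sum3: "(\<Sum>i<(3::nat). f i) = f 0 + f 1 + f (2::nat)"
  by (simp add: numeral_3_eq_3 numeral_2_eq_2)

context thm_ctx begin

lemma P_c: "P \<in> carrier_mat N N" and P_sym: "P\<^sup>T = P"
  and P_pos: "\<And>v. v \<in> carrier_vec N \<Longrightarrow> v \<noteq> 0\<^sub>v N \<Longrightarrow> 0 < v \<bullet> (P *\<^sub>v v)"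
  using P unfolding pd_mat_def by auto

definition "Pinv = the (mat_inverse P)"

lemma Pinv: "Pinv \<in> carrier_mat N N" "P * Pinv = 1\<^sub>m N" "Pinv * P = 1\<^sub>m N"
proof -
  have dP: "det P \<noteq> 0"
  proof
    assume "det P = 0"
    then obtain v where v: "v \<in> carrier_vec N" "v \<noteq> 0\<^sub>v N" "P *\<^sub>v v = 0\<^sub>v N"
      using det_0_iff_vec_prod_zero[OF P_c] by auto
    have "0 < v \<bullet> (P *\<^sub>v v)" using P_pos[OF v(1) v(2)] .
    thus False using v by simp
  qed
  have U: "P \<in> Units (ring_mat TYPE(real) N ())" using det_non_zero_imp_unit[OF P_c dP] .
  have "mat_inverse P \<noteq> None"
  proof
    assume "mat_inverse P = None"
    from mat_inverse(1)[OF P_c this, where b = "()"] U show False by simp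
  qed
  then obtain B where B: "mat_inverse P = Some B" by auto
  from mat_inverse(2)[OF P_c B] B show "Pinv \<in> carrier_mat N N" "P * Pinv = 1\<^sub>m N" "Pinv * P = 1\<^sub>m N"
    by (auto simp: Pinv_def)
qed

definition "K = Y * Pinv"
definition "Fm = F_mat p m l"
definition "Blm = B_mat p m l"
definition "Phi = Fm + Blm * K + Lm * G0"

lemma K_c: "K \<in> carrier_mat m N" using Y Pinv by (simp add: K_def)
lemma KP: "K * P = Y" using Y Pinv P_c by (simp add: K_def assoc_mult_mat[of Y m N Pinv N P N])
lemma Fm_c: "Fm \<in> carrier_mat N N" by (simp add: Fm_def F_mat_def shift_mat_def)
lemma Blm_c: "Blm \<in> carrier_mat N m" by (simp add: Blm_def B_mat_def)
lemma Phi_c: "Phi \<in> carrier_mat N N" using Fm_c Blm_c K_c Lm_c G0_c by (simp add: Phi_def)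

definition "Mb = (\<lambda>(i::nat) (j::nat).
                   if i = 0 \<and> j = 0 then - P - Lm * Caug * Lm\<^sup>T
                   else if i = 0 \<and> j = 1 then Fm * P + Blm * Y
                   else if i = 0 \<and> j = 2 then Lm * Baug
                   else if i = 1 \<and> j = 0 then P * Fm\<^sup>T + Y\<^sup>T * Blm\<^sup>T
                   else if i = 1 \<and> j = 1 then - P
                   else if i = 1 \<and> j = 2 then - P
                   else if i = 2 \<and> j = 0 then Baug\<^sup>T * Lm\<^sup>T
                   else if i = 2 \<and> j = 1 then - P
                   else - Aaug)"

lemma LMI': "nd_mat (block3 N Mb) (3 * N)"
  using LMI unfolding Let_def Mb_def Aaug_def Baug_def Caug_def Lm_def Ps0_def Ps1_def Fm_def Blm_def .

end

lemma qf_neg: "A \<in> carrier_mat r c \<Longrightarrow> x \<in> carrier_vec r \<Longrightarrow> y \<in> carrier_vec c \<Longrightarrow>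
  x \<bullet> ((- A) *\<^sub>v y) = - (x \<bullet> (A *\<^sub>v (y :: real vec)))"
  by (subst uminus_mult_mat_vec) (auto intro!: scalar_prod_uminus_right)

lemma qf_minus: "A \<in> carrier_mat r c \<Longrightarrow> B \<in> carrier_mat r c \<Longrightarrow> x \<in> carrier_vec r \<Longrightarrow> y \<in> carrier_vec c \<Longrightarrow>
  x \<bullet> ((A - B) *\<^sub>v y) = x \<bullet> (A *\<^sub>v y) - x \<bullet> (B *\<^sub>v (y :: real vec))"
  by (subst minus_mult_distrib_mat_vec[of A r c]) (auto intro!: scalar_prod_minus_distrib[of _ r])

lemma qf_plus: "A \<in> carrier_mat r c \<Longrightarrow> B \<in> carrier_mat r c \<Longrightarrow> x \<in> carrier_vec r \<Longrightarrow> y \<in> carrier_vec c \<Longrightarrow>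
  x \<bullet> ((A + B) *\<^sub>v y) = x \<bullet> (A *\<^sub>v y) + x \<bullet> (B *\<^sub>v (y :: real vec))"
  by (subst add_mult_distrib_mat_vec[of A r c]) (auto intro!: scalar_prod_add_distrib[of _ r])

lemma qf_mult: "A \<in> carrier_mat r q \<Longrightarrow> B \<in> carrier_mat q c \<Longrightarrow> x \<in> carrier_vec r \<Longrightarrow> y \<in> carrier_vec c \<Longrightarrow>
  x \<bullet> ((A * B) *\<^sub>v y) = (A\<^sup>T *\<^sub>v x) \<bullet> (B *\<^sub>v (y :: real vec))"
proof -
  assume A: "A \<in> carrier_mat r q" and B: "B \<in> carrier_mat q c" and x: "x \<in> carrier_vec r" and y: "y \<in> carrier_vec c"
  have By: "B *\<^sub>v y \<in> carrier_vec q" using B by (intro carrier_vecI) simp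
  have "x \<bullet> ((A * B) *\<^sub>v y) = x \<bullet> (A *\<^sub>v (B *\<^sub>v y))" using assoc_mult_mat_vec[OF A B y] by simp
  also have "\<dots> = (A\<^sup>T *\<^sub>v x) \<bullet> (B *\<^sub>v y)" using transpose_vec_mult_scalar[OF A By x] by simp
  finally show ?thesis .
qed

lemma qf_swap: "A \<in> carrier_mat r c \<Longrightarrow> x \<in> carrier_vec r \<Longrightarrow> y \<in> carrier_vec c \<Longrightarrow>
  y \<bullet> (A\<^sup>T *\<^sub>v x) = x \<bullet> (A *\<^sub>v (y :: real vec))"
proof -
  assume A: "A \<in> carrier_mat r c" and x: "x \<in> carrier_vec r" and y: "y \<in> carrier_vec c"
  have "A\<^sup>T *\<^sub>v x \<in> carrier_vec c" using A by (intro carrier_vecI) simp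
  hence "y \<bullet> (A\<^sup>T *\<^sub>v x) = (A\<^sup>T *\<^sub>v x) \<bullet> y" using y by (simp add: comm_scalar_prod[of _ c])
  also have "\<dots> = x \<bullet> (A *\<^sub>v y)" using transpose_vec_mult_scalar[OF A y x] .
  finally show ?thesis .
qed

lemma idx3: assumes "(i::nat) < x" shows "i < 3*x" "x + i < 3*x" "\<not> x + i < x" "x + i < 2*x"
  "2*x + i < 3*x" "\<not> 2*x + i < x" "\<not> 2*x + i < 2*x"
  using assms by auto

context thm_ctx begin

lemma Mb_c: "i < 3 \<Longrightarrow> j < 3 \<Longrightarrow> Mb i j \<in> carrier_mat N N"
proof -
  assume i: "i < 3" and j: "j < 3"
  have c: "P \<in> carrier_mat N N" "Lm \<in> carrier_mat N p" "Caug \<in> carrier_mat p p" "Fm \<in> carrier_mat N N"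
    "Blm \<in> carrier_mat N m" "Y \<in> carrier_mat m N" "Baug \<in> carrier_mat p N" "Aaug \<in> carrier_mat N N"
    using P_c Lm_c Caug_c Fm_c Blm_c Y Baug_c Aaug_c by auto
  have "i = 0 \<or> i = 1 \<or> i = 2" "j = 0 \<or> j = 1 \<or> j = 2" using i j by auto
  thus ?thesis using c unfolding Mb_def by (elim disjE) (simp_all add: minus_carrier_mat)
qed

lemma P_swap: "x \<in> carrier_vec N \<Longrightarrow> y \<in> carrier_vec N \<Longrightarrow> y \<bullet> (P *\<^sub>v x) = x \<bullet> (P *\<^sub>v y)"
  using qf_swap[OF P_c, of x y] P_sym by simp

lemma dec: assumes a: "a \<in> carrier_vec N" and anz: "a \<noteq> 0\<^sub>v N"
  shows "(Phi\<^sup>T *\<^sub>v a) \<bullet> (P *\<^sub>v (Phi\<^sup>T *\<^sub>v a)) < a \<bullet> (P *\<^sub>v a)"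
proof -
  define b where "b = Phi\<^sup>T *\<^sub>v a"
  define s where "s = Lm\<^sup>T *\<^sub>v a"
  define g where "g = G0\<^sup>T *\<^sub>v s"
  define c where "c = - g"
  have b: "b \<in> carrier_vec N" using Phi_c unfolding b_def by (intro carrier_vecI) simp
  have s: "s \<in> carrier_vec p" using Lm_c unfolding s_def by (intro carrier_vecI) simp
  have g: "g \<in> carrier_vec N" using G0_c unfolding g_def by (intro carrier_vecI) simp
  have c: "c \<in> carrier_vec N" using g by (simp add: c_def)
  define w where "w = vec (3*N) (\<lambda>i. if i < N then a$i else if i < 2*N then b$(i-N) else c$(i-2*N))"
  have w: "w \<in> carrier_vec (3*N)" by (simp add: w_def)
  have wi: "w $ k = (if k < N then a$k else if k < 2*N then b$(k-N) else c$(k-2*N))" if "k < 3*N" for k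
    using that unfolding w_def by (rule index_vec)
  have blk0: "vec N (\<lambda>i. w$(0*N+i)) = a"
  proof (rule eq_vecI)
    fix i assume "i < dim_vec a"
    hence i: "i < N" using a by simp
    hence "i < 3*N" by (rule idx3)
    thus "vec N (\<lambda>i. w$(0*N+i)) $ i = a $ i" using wi i by simp
  qed (use a in simp)
  have blk1: "vec N (\<lambda>i. w$(1*N+i)) = b"
  proof (rule eq_vecI)
    fix i assume "i < dim_vec b"
    hence i: "i < N" using b by simp
    note ix = idx3(2-4)[OF i]
    show "vec N (\<lambda>i. w$(1*N+i)) $ i = b $ i" using wi[OF ix(1)] ix i by simp
  qed (use b in simp)
  have blk2: "vec N (\<lambda>i. w$(2*N+i)) = c"
  proof (rule eq_vecI)
    fix i assume "i < dim_vec c"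
    hence i: "i < N" using c by simp
    note ix = idx3(5-7)[OF i]
    show "vec N (\<lambda>i. w$(2*N+i)) $ i = c $ i" using wi[OF ix(1)] ix i by simp
  qed (use c in simp)
  have wnz: "w \<noteq> 0\<^sub>v (3*N)"
  proof
    assume w0: "w = 0\<^sub>v (3*N)"
    have "a = 0\<^sub>v N"
    proof (rule eq_vecI)
      fix i assume "i < dim_vec (0\<^sub>v N :: real vec)"
      hence i: "i < N" by simp
      have i3: "i < 3*N" using i by (rule idx3)
      have "w $ i = 0" using w0 i3 by simp
      thus "a $ i = 0\<^sub>v N $ i" using i wi[OF i3] by simp
    qed (use a in simp)
    thus False using anz by simp
  qed
  have B3c: "block3 N Mb \<in> carrier_mat (3*N) (3*N)" by (simp add: block3_def)
  have "0 < w \<bullet> ((- block3 N Mb) *\<^sub>v w)" using LMI' w wnz unfolding nd_mat_def pd_mat_def by auto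
  hence neg: "w \<bullet> (block3 N Mb *\<^sub>v w) < 0" using qf_neg[OF B3c w w] by simp
  define t where "t i j = vec N (\<lambda>k. w$(i*N+k)) \<bullet> (Mb i j *\<^sub>v vec N (\<lambda>k. w$(j*N+k)))" for i j :: nat
  have "w \<bullet> (block3 N Mb *\<^sub>v w) = (\<Sum>(i::nat)<3. \<Sum>(j::nat)<3. t i j)"
    unfolding t_def by (rule block3_qf[OF Mb_c w])
  also have "\<dots> = t 0 0 + t 0 1 + t 0 2 + (t 1 0 + t 1 1 + t 1 2) + (t 2 0 + t 2 1 + t 2 2)"
    by (simp add: sum3)
  finally have expand: "w \<bullet> (block3 N Mb *\<^sub>v w) = t 0 0 + t 0 1 + t 0 2 + (t 1 0 + t 1 1 + t 1 2) + (t 2 0 + t 2 1 + t 2 2)" .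
  have bl: "vec N (\<lambda>k. w$(0*N+k)) = a" "vec N (\<lambda>k. w$(1*N+k)) = b" "vec N (\<lambda>k. w$(2*N+k)) = c"
    using blk0 blk1 blk2 by auto
  have LT: "Lm\<^sup>T \<in> carrier_mat p N" using Lm_c by simp
  define M01 where "M01 = Fm * P + Blm * Y"
  have M01c: "M01 \<in> carrier_mat N N" using Fm_c P_c Blm_c Y by (simp add: M01_def)
  have M10: "P * Fm\<^sup>T + Y\<^sup>T * Blm\<^sup>T = M01\<^sup>T"
    unfolding M01_def using Fm_c P_c Blm_c Y P_sym
    by (simp add: transpose_add[of _ N N] transpose_mult[of _ N N _ N] transpose_mult[of _ N m _ N])
  have LB: "Lm * Baug \<in> carrier_mat N N" using Lm_c Baug_c by simp
  have M20: "Baug\<^sup>T * Lm\<^sup>T = (Lm * Baug)\<^sup>T" using transpose_mult[OF Lm_c Baug_c] by simp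
  have LCL: "Lm * Caug * Lm\<^sup>T \<in> carrier_mat N N" using Lm_c Caug_c by simp
  have t00: "t 0 0 = - (a \<bullet> (P *\<^sub>v a)) - s \<bullet> (Caug *\<^sub>v s)"
  proof -
    have nP: "- P \<in> carrier_mat N N" using P_c by simp
    have "t 0 0 = a \<bullet> ((- P - Lm * Caug * Lm\<^sup>T) *\<^sub>v a)" unfolding t_def bl by (simp add: Mb_def)
    also have "\<dots> = a \<bullet> ((- P) *\<^sub>v a) - a \<bullet> ((Lm * Caug * Lm\<^sup>T) *\<^sub>v a)" by (rule qf_minus[OF nP LCL a a])
    also have "a \<bullet> ((- P) *\<^sub>v a) = - (a \<bullet> (P *\<^sub>v a))" by (rule qf_neg[OF P_c a a])
    also have "a \<bullet> ((Lm * Caug * Lm\<^sup>T) *\<^sub>v a) = s \<bullet> (Caug *\<^sub>v (Lm\<^sup>T *\<^sub>v a))"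
    proof -
      have LC: "Lm * Caug \<in> carrier_mat N p" using Lm_c Caug_c by simp
      have "a \<bullet> ((Lm * Caug * Lm\<^sup>T) *\<^sub>v a) = ((Lm * Caug)\<^sup>T *\<^sub>v a) \<bullet> (Lm\<^sup>T *\<^sub>v a)" by (rule qf_mult[OF LC LT a a])
      also have "\<dots> = a \<bullet> ((Lm * Caug) *\<^sub>v (Lm\<^sup>T *\<^sub>v a))"
      proof -
        have LCTa: "(Lm * Caug)\<^sup>T *\<^sub>v a \<in> carrier_vec p" using LC Caug_c by (intro carrier_vecI) simp
        show ?thesis using qf_swap[OF LC a s] comm_scalar_prod[OF LCTa s] unfolding s_def by simp
      qed
      also have "\<dots> = s \<bullet> (Caug *\<^sub>v (Lm\<^sup>T *\<^sub>v a))"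
        using qf_mult[OF Lm_c Caug_c a s] unfolding s_def by simp
      finally show ?thesis .
    qed
    finally show ?thesis unfolding s_def by simp
  qed
  have t01: "t 0 1 = a \<bullet> (M01 *\<^sub>v b)" unfolding t_def bl by (simp add: Mb_def M01_def)
  have t10: "t 1 0 = a \<bullet> (M01 *\<^sub>v b)"
  proof -
    have "t 1 0 = b \<bullet> (M01\<^sup>T *\<^sub>v a)" unfolding t_def bl M10[symmetric] by (simp add: Mb_def)
    also have "\<dots> = a \<bullet> (M01 *\<^sub>v b)" by (rule qf_swap[OF M01c a b])
    finally show ?thesis .
  qed
  have t02: "t 0 2 = s \<bullet> (Baug *\<^sub>v c)"
  proof -
    have "t 0 2 = a \<bullet> ((Lm * Baug) *\<^sub>v c)" unfolding t_def bl by (simp add: Mb_def)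
    also have "\<dots> = s \<bullet> (Baug *\<^sub>v c)" using qf_mult[OF Lm_c Baug_c a c] unfolding s_def by simp
    finally show ?thesis .
  qed
  have t20: "t 2 0 = s \<bullet> (Baug *\<^sub>v c)"
  proof -
    have "t 2 0 = c \<bullet> ((Lm * Baug)\<^sup>T *\<^sub>v a)" unfolding t_def bl M20[symmetric] by (simp add: Mb_def)
    also have "\<dots> = a \<bullet> ((Lm * Baug) *\<^sub>v c)" by (rule qf_swap[OF LB a c])
    also have "\<dots> = s \<bullet> (Baug *\<^sub>v c)" using qf_mult[OF Lm_c Baug_c a c] unfolding s_def by simp
    finally show ?thesis .
  qed
  have t11: "t 1 1 = - (b \<bullet> (P *\<^sub>v b))" unfolding t_def bl by (simp add: Mb_def qf_neg[OF P_c b b])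
  have t12: "t 1 2 = - (b \<bullet> (P *\<^sub>v c))" unfolding t_def bl by (simp add: Mb_def qf_neg[OF P_c b c])
  have t21: "t 2 1 = - (b \<bullet> (P *\<^sub>v c))" unfolding t_def bl
    by (simp add: Mb_def qf_neg[OF P_c c b] P_swap[OF b c])
  have t22: "t 2 2 = - (c \<bullet> (Aaug *\<^sub>v c))" unfolding t_def bl by (simp add: Mb_def qf_neg[OF Aaug_c c c])
  have cB: "s \<bullet> (Baug *\<^sub>v c) = - (s \<bullet> (Baug *\<^sub>v g))"
    unfolding c_def mult_mat_vec_uminus[OF Baug_c g] using s Baug_c by (intro scalar_prod_uminus_right) simp
  have cA: "c \<bullet> (Aaug *\<^sub>v c) = g \<bullet> (Aaug *\<^sub>v g)"
    unfolding c_def mult_mat_vec_uminus[OF Aaug_c g] using g Aaug_c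
    by (simp add: scalar_prod_uminus_right scalar_prod_uminus_left)
  have cP: "b \<bullet> (P *\<^sub>v c) = - (b \<bullet> (P *\<^sub>v g))"
    unfolding c_def mult_mat_vec_uminus[OF P_c g] using b P_c by (intro scalar_prod_uminus_right) simp
  have key: "a \<bullet> (M01 *\<^sub>v b) + b \<bullet> (P *\<^sub>v g) = b \<bullet> (P *\<^sub>v b)"
  proof -
    define pb where "pb = P *\<^sub>v b"
    have pb: "pb \<in> carrier_vec N" using P_c unfolding pb_def by (intro carrier_vecI) simp
    have Kpb: "K *\<^sub>v pb \<in> carrier_vec m" using K_c by (intro carrier_vecI) simp
    have Gpb: "G0 *\<^sub>v pb \<in> carrier_vec p" using G0_c by (intro carrier_vecI) simp
    have Fpb: "Fm *\<^sub>v pb \<in> carrier_vec N" using Fm_c by (intro carrier_vecI) simp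
    have BK: "Blm *\<^sub>v (K *\<^sub>v pb) \<in> carrier_vec N" using Blm_c by (intro carrier_vecI) simp
    have LG: "Lm *\<^sub>v (G0 *\<^sub>v pb) \<in> carrier_vec N" using Lm_c by (intro carrier_vecI) simp
    have m1: "M01 *\<^sub>v b = Fm *\<^sub>v pb + Blm *\<^sub>v (K *\<^sub>v pb)"
    proof -
      have "M01 *\<^sub>v b = (Fm * P) *\<^sub>v b + (Blm * Y) *\<^sub>v b"
        unfolding M01_def using Fm_c P_c Blm_c Y b by (intro add_mult_distrib_mat_vec[of _ N N]) auto
      also have "(Fm * P) *\<^sub>v b = Fm *\<^sub>v pb" unfolding pb_def using assoc_mult_mat_vec[OF Fm_c P_c b] .
      also have "(Blm * Y) *\<^sub>v b = Blm *\<^sub>v (K *\<^sub>v pb)"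
      proof -
        have "Blm * (K * P) = Blm * Y" using KP by simp
        hence "(Blm * Y) *\<^sub>v b = (Blm * (K * P)) *\<^sub>v b" by simp
        also have "\<dots> = Blm *\<^sub>v ((K * P) *\<^sub>v b)" using Blm_c K_c P_c b by (intro assoc_mult_mat_vec) auto
        also have "(K * P) *\<^sub>v b = K *\<^sub>v pb" unfolding pb_def using assoc_mult_mat_vec[OF K_c P_c b] .
        finally show ?thesis .
      qed
      finally show ?thesis .
    qed
    have m2: "b \<bullet> (P *\<^sub>v g) = a \<bullet> (Lm *\<^sub>v (G0 *\<^sub>v pb))"
    proof -
      have "b \<bullet> (P *\<^sub>v g) = g \<bullet> pb" unfolding pb_def using P_swap[OF g b] .
      also have "\<dots> = s \<bullet> (G0 *\<^sub>v pb)" unfolding g_def by (rule transpose_vec_mult_scalar[OF G0_c pb s])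
      also have "\<dots> = a \<bullet> (Lm *\<^sub>v (G0 *\<^sub>v pb))" unfolding s_def by (rule transpose_vec_mult_scalar[OF Lm_c Gpb a])
      finally show ?thesis .
    qed
    have "Phi *\<^sub>v pb = Fm *\<^sub>v pb + Blm *\<^sub>v (K *\<^sub>v pb) + Lm *\<^sub>v (G0 *\<^sub>v pb)"
    proof -
      have c1: "Fm + Blm * K \<in> carrier_mat N N" using Fm_c Blm_c K_c by simp
      have c2: "Lm * G0 \<in> carrier_mat N N" using Lm_c G0_c by simp
      have c3: "Blm * K \<in> carrier_mat N N" using Blm_c K_c by simp
      have "Phi *\<^sub>v pb = (Fm + Blm * K) *\<^sub>v pb + (Lm * G0) *\<^sub>v pb"
        unfolding Phi_def using add_mult_distrib_mat_vec[OF c1 c2 pb] .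
      also have "(Fm + Blm * K) *\<^sub>v pb = Fm *\<^sub>v pb + (Blm * K) *\<^sub>v pb" using add_mult_distrib_mat_vec[OF Fm_c c3 pb] .
      also have "(Blm * K) *\<^sub>v pb = Blm *\<^sub>v (K *\<^sub>v pb)" using assoc_mult_mat_vec[OF Blm_c K_c pb] .
      also have "(Lm * G0) *\<^sub>v pb = Lm *\<^sub>v (G0 *\<^sub>v pb)" using assoc_mult_mat_vec[OF Lm_c G0_c pb] .
      finally show ?thesis .
    qed
    hence "a \<bullet> (Phi *\<^sub>v pb) = a \<bullet> (M01 *\<^sub>v b) + b \<bullet> (P *\<^sub>v g)"
      unfolding m1 m2 using a Fpb BK LG by (simp add: scalar_prod_add_distrib[of _ N])
    moreover have "a \<bullet> (Phi *\<^sub>v pb) = b \<bullet> pb" unfolding b_def using transpose_vec_mult_scalar[OF Phi_c pb a] by simp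
    ultimately show ?thesis unfolding pb_def by simp
  qed
  have Q: "s \<bullet> (Caug *\<^sub>v s) + 2 * (s \<bullet> (Baug *\<^sub>v g)) + g \<bullet> (Aaug *\<^sub>v g) \<le> 0"
    using Qneg[OF s] unfolding g_def .
  have "w \<bullet> (block3 N Mb *\<^sub>v w) = - (a \<bullet> (P *\<^sub>v a)) - (s \<bullet> (Caug *\<^sub>v s) + 2 * (s \<bullet> (Baug *\<^sub>v g)) + g \<bullet> (Aaug *\<^sub>v g))
     + 2 * (a \<bullet> (M01 *\<^sub>v b) + b \<bullet> (P *\<^sub>v g)) - b \<bullet> (P *\<^sub>v b)"
    unfolding expand t00 t01 t10 t02 t20 t11 t12 t21 t22 cB cA cP by simp
  hence eq2: "w \<bullet> (block3 N Mb *\<^sub>v w) = - (a \<bullet> (P *\<^sub>v a)) - (s \<bullet> (Caug *\<^sub>v s) + 2 * (s \<bullet> (Baug *\<^sub>v g)) + g \<bullet> (Aaug *\<^sub>v g))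
     + 2 * (b \<bullet> (P *\<^sub>v b)) - b \<bullet> (P *\<^sub>v b)" unfolding key .
  define A0 where "A0 = a \<bullet> (P *\<^sub>v a)"
  define B0 where "B0 = b \<bullet> (P *\<^sub>v b)"
  define Q0 where "Q0 = s \<bullet> (Caug *\<^sub>v s) + 2 * (s \<bullet> (Baug *\<^sub>v g)) + g \<bullet> (Aaug *\<^sub>v g)"
  define W0 where "W0 = w \<bullet> (block3 N Mb *\<^sub>v w)"
  have "W0 = - A0 - Q0 + 2 * B0 - B0" using eq2 unfolding A0_def B0_def Q0_def W0_def .
  moreover have "Q0 \<le> 0" using Q unfolding Q0_def .
  moreover have "W0 < 0" using neg unfolding W0_def .
  ultimately have "B0 < A0" by linarith
  thus ?thesis unfolding A0_def B0_def b_def .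
qed

end

context thm_ctx begin

lemma sum_delta_nat: "t < (M::nat) \<Longrightarrow> (\<Sum>j<M. (if j = t then 1 else 0) * (v::real vec) $ j) = v $ t"
proof -
  assume t: "t < M"
  have "(\<Sum>j<M. (if j = t then 1 else 0) * v $ j) = (\<Sum>j<M. if j = t then v $ j else 0)"
    by (intro sum.cong) auto
  also have "\<dots> = v $ t" using t by simp
  finally show ?thesis .
qed

lemma F_mult: assumes v: "v \<in> carrier_vec N" and i: "i < N"
  shows "(Fm *\<^sub>v v) $ i = (if i < p*l then (if i + p < p*l then v$(i+p) else 0)
                          else (if i + m < N then v$(i+m) else 0))"
proof -
  have e: "(Fm *\<^sub>v v) $ i = (\<Sum>j<N. Fm $$ (i,j) * v$j)"
    using Fm_c v i by (simp add: scalar_prod_def row_def atLeast0LessThan)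
  show ?thesis
  proof (cases "i < p*l")
    case True
    have "Fm $$ (i,j) = (if j = i + p \<and> i + p < p*l then 1 else 0)" if j: "j < N" for j
      using True j by (auto simp: Fm_def F_mat_def shift_mat_def)
    hence "(\<Sum>j<N. Fm $$ (i,j) * v$j) = (\<Sum>j<N. (if j = i + p \<and> i + p < p*l then 1 else 0) * v$j)"
      by (intro sum.cong) auto
    also have "\<dots> = (if i + p < p*l then v$(i+p) else 0)"
    proof (cases "i + p < p*l")
      case True
      hence "i + p < N" by simp
      thus ?thesis using True sum_delta_nat[of "i+p" N v] by simp
    qed simp
    finally show ?thesis using e True by simp
  next
    case False
    have "Fm $$ (i,j) = (if j = i + m then 1 else 0)" if j: "j < N" for j
      using False j i by (auto simp: Fm_def F_mat_def shift_mat_def)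
    hence "(\<Sum>j<N. Fm $$ (i,j) * v$j) = (\<Sum>j<N. (if j = i + m then 1 else 0) * v$j)"
      by (intro sum.cong) auto
    also have "\<dots> = (if i + m < N then v$(i+m) else 0)"
    proof (cases "i + m < N")
      case True
      thus ?thesis using sum_delta_nat[of "i+m" N v] by simp
    next
      case False
      have "(if j = i + m then 1 else 0) * v$j = 0" if "j < N" for j using that False by auto
      thus ?thesis using False by simp
    qed
    finally show ?thesis using e False by simp
  qed
qed

lemma L_mult: assumes y: "y \<in> carrier_vec p" and i: "i < N"
  shows "(Lm *\<^sub>v y) $ i = (if p*l - p \<le> i \<and> i < p*l then y $ (i - (p*l - p)) else 0)"
proof -
  have pp: "p \<le> p*l" using pl_pos by simp
  have e: "(Lm *\<^sub>v y) $ i = (\<Sum>c<p. (if c = i - (p*l - p) \<and> p*l - p \<le> i then 1 else 0) * y$c)"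
    using Lm_c y i pp by (auto simp: Lm_def L_mat_def scalar_prod_def row_def atLeast0LessThan intro!: sum.cong)
  show ?thesis
  proof (cases "p*l - p \<le> i \<and> i < p*l")
    case True
    hence t: "i - (p*l - p) < p" using pp by linarith
    have "(\<Sum>c<p. (if c = i - (p*l - p) \<and> p*l - p \<le> i then 1 else 0) * y$c) = (\<Sum>c<p. (if c = i - (p*l - p) then 1 else 0) * y$c)"
      using True by simp
    thus ?thesis using e True sum_delta_nat[OF t, of y] by simp
  next
    case False
    have "(if c = i - (p*l - p) \<and> p*l - p \<le> i then 1 else 0) * y$c = 0" if "c < p" for c
      using False that pp by auto
    hence "(\<Sum>c<p. (if c = i - (p*l - p) \<and> p*l - p \<le> i then 1 else 0) * y$c) = 0"
      by (intro sum.neutral) auto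
    hence "(Lm *\<^sub>v y) $ i = 0" using e by simp
    moreover have "(if p*l - p \<le> i \<and> i < p*l then y $ (i - (p*l - p)) else 0) = 0" using False by (rule if_not_P)
    ultimately show ?thesis by simp
  qed
qed

lemma B_mult: assumes u: "u \<in> carrier_vec m" and i: "i < N"
  shows "(Blm *\<^sub>v u) $ i = (if N - m \<le> i then u $ (i - (N - m)) else 0)"
proof -
  have e: "(Blm *\<^sub>v u) $ i = (\<Sum>c<m. (if c = i - (N - m) \<and> N - m \<le> i then 1 else 0) * u$c)"
    using Blm_c u i by (auto simp: Blm_def B_mat_def scalar_prod_def row_def atLeast0LessThan intro!: sum.cong)
  show ?thesis
  proof (cases "N - m \<le> i")
    case True
    hence t: "i - (N - m) < m" using i by linarith
    have "(\<Sum>c<m. (if c = i - (N - m) \<and> N - m \<le> i then 1 else 0) * u$c) = (\<Sum>c<m. (if c = i - (N - m) then 1 else 0) * u$c)"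
      using True by simp
    thus ?thesis using e True sum_delta_nat[OF t, of u] by simp
  next
    case False
    thus ?thesis using e by simp
  qed
qed

end

lemma divmod_last: fixes q L j :: nat assumes q: "q > 0" and L: "L \<ge> 1" and j: "j < q*L" and j2: "\<not> j + q < q*L"
  shows "j div q = L - 1" "j mod q = j - (q*L - q)"
proof -
  obtain L' where L': "L = Suc L'" using L by (cases L) auto
  have qL: "q*L = L'*q + q" unfolding L' by simp
  have r1: "L'*q \<le> j" using j2 qL by linarith
  have r2: "j - L'*q < q" using j qL r1 by linarith
  have j3: "j = L'*q + (j - L'*q)" using r1 by simp
  have d: "(L'*q + (j - L'*q)) div q = L'" using r2 by simp
  have mo: "(L'*q + (j - L'*q)) mod q = j - L'*q" using r2 by simp
  show "j div q = L - 1" using d j3 L' by simp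
  have "q*L - q = L'*q" using qL by simp
  thus "j mod q = j - (q*L - q)" using mo j3 by simp
qed

lemma divmod_step: fixes q j :: nat assumes q: "q > 0" shows "(j + q) div q = Suc (j div q)" "(j + q) mod q = j mod q"
  using q by simp_all

context thm_ctx begin

lemma K_eq: "Y * the (mat_inverse P) = K" by (simp add: K_def Pinv_def)

lemma N_pos: "N > 0" using pl_pos by simp

context
  fixes x xa chi
  assumes sol: "closed_loop_sol As Bs Cs Aa Ba Ca Fm Lm Blm K n na N x xa chi"
begin

lemma sol_c: "x k \<in> carrier_vec n" "xa k \<in> carrier_vec na" "chi k \<in> carrier_vec N"
  using sol unfolding closed_loop_sol_def by auto

lemma sol_x: "x (Suc k) = As *\<^sub>v x k + Bs *\<^sub>v (K *\<^sub>v chi k)"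
  using sol unfolding closed_loop_sol_def by auto

lemma sol_xa: "xa (Suc k) = Aa *\<^sub>v xa k + Ba *\<^sub>v (K *\<^sub>v chi k)"
proof -
  have "xa (Suc k) = Aa *\<^sub>v xa k + (Ba * K) *\<^sub>v chi k" using sol unfolding closed_loop_sol_def by auto
  also have "(Ba * K) *\<^sub>v chi k = Ba *\<^sub>v (K *\<^sub>v chi k)" using assoc_mult_mat_vec[OF Ba K_c sol_c(3)] .
  finally show ?thesis .
qed

definition "yA k = Cs *\<^sub>v x k + Ca *\<^sub>v xa k"
definition "uu k = K *\<^sub>v chi k"

lemma yA_c: "yA k \<in> carrier_vec p" using Cs Ca unfolding yA_def by (intro carrier_vecI) simp
lemma uu_c: "uu k \<in> carrier_vec m" using K_c unfolding uu_def by (intro carrier_vecI) simp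

lemma chi_step: "chi (Suc k) = Fm *\<^sub>v chi k + Lm *\<^sub>v yA k + Blm *\<^sub>v uu k"
proof -
  have e: "chi (Suc k) = (Lm * Ca) *\<^sub>v xa k + (Fm + Blm * K) *\<^sub>v chi k + Lm *\<^sub>v (Cs *\<^sub>v x k)"
    using sol unfolding closed_loop_sol_def by auto
  have BK: "Blm * K \<in> carrier_mat N N" using Blm_c K_c by simp
  have 1: "(Lm * Ca) *\<^sub>v xa k = Lm *\<^sub>v (Ca *\<^sub>v xa k)" using assoc_mult_mat_vec[OF Lm_c Ca sol_c(2)] .
  have 2: "(Fm + Blm * K) *\<^sub>v chi k = Fm *\<^sub>v chi k + Blm *\<^sub>v uu k"
    using add_mult_distrib_mat_vec[OF Fm_c BK sol_c(3)] assoc_mult_mat_vec[OF Blm_c K_c sol_c(3)] by (simp add: uu_def)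
  have cx: "Cs *\<^sub>v x k \<in> carrier_vec p" "Ca *\<^sub>v xa k \<in> carrier_vec p"
    using Cs Ca by (auto intro!: carrier_vecI)
  have 3: "Lm *\<^sub>v yA k = Lm *\<^sub>v (Cs *\<^sub>v x k) + Lm *\<^sub>v (Ca *\<^sub>v xa k)"
    unfolding yA_def using mult_add_distrib_mat_vec[OF Lm_c cx] .
  have d: "dim_row Lm = N" "dim_row Fm = N" "dim_row Blm = N" using Lm_c Fm_c Blm_c by auto
  show ?thesis unfolding e 1 2 3 by (rule eq_vecI) (simp_all add: d)
qed

lemma chi_idx: "i < N \<Longrightarrow> chi (Suc k) $ i = (Fm *\<^sub>v chi k) $ i + (Lm *\<^sub>v yA k) $ i + (Blm *\<^sub>v uu k) $ i"
  unfolding chi_step using Lm_c Fm_c Blm_c by simp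

end
end

context thm_ctx begin
context
  fixes x xa chi
  assumes sol: "closed_loop_sol As Bs Cs Aa Ba Ca Fm Lm Blm K n na N x xa chi"
begin

lemma chi_struct: "\<forall>i<N. (i < p*l \<longrightarrow> l \<le> i div p + k \<longrightarrow> chi k $ i = yA x xa (k + i div p - l) $ (i mod p)) \<and>
   (\<not> i < p*l \<longrightarrow> l \<le> (i - p*l) div m + k \<longrightarrow> chi k $ i = uu chi (k + (i - p*l) div m - l) $ ((i - p*l) mod m))"
proof (induction k)
  case 0
  show ?case
  proof (intro allI impI conjI)
    fix i assume i: "i < N"
    {
      assume "i < p*l" "l \<le> i div p + 0"
      thus "chi 0 $ i = yA x xa (0 + i div p - l) $ (i mod p)" using aug.div_p_lt by fastforce
    }
    {
      assume "\<not> i < p*l" "l \<le> (i - p*l) div m + 0"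
      thus "chi 0 $ i = uu chi (0 + (i - p*l) div m - l) $ ((i - p*l) mod m)"
        using aug.stack_idx[unfolded NN_eq, OF i] by fastforce
    }
  qed
next
  case (Suc k)
  have pp: "p > 0" and l1: "l \<ge> 1" using pl_pos by auto
  have ml: "m \<le> m*l" using l1 by simp
  show ?case
  proof (intro allI impI conjI)
    fix i assume i: "i < N"
    note ci = chi_idx[OF sol i, of k]
    {
      assume ipl: "i < p*l" and cond: "l \<le> i div p + Suc k"
      have nle: "\<not> N - m \<le> i" using ipl ml by linarith
      have B0: "(Blm *\<^sub>v uu chi k) $ i = 0" using B_mult[OF uu_c[OF sol] i] nle by simp
      show "chi (Suc k) $ i = yA x xa (Suc k + i div p - l) $ (i mod p)"
      proof (cases "i + p < p*l")
        case True
        have F: "(Fm *\<^sub>v chi k) $ i = chi k $ (i+p)" using F_mult[OF sol_c(3)[OF sol] i] ipl True by simp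
        have L0: "(Lm *\<^sub>v yA x xa k) $ i = 0" using L_mult[OF yA_c[OF sol] i] True by simp
        have ip: "i + p < N" using True by simp
        have dm: "(i + p) div p = Suc (i div p)" "(i + p) mod p = i mod p" using divmod_step[OF pp] by auto
        have "chi k $ (i+p) = yA x xa (k + (i+p) div p - l) $ ((i+p) mod p)"
          using Suc.IH ip True cond dm by auto
        thus ?thesis using ci F L0 B0 dm by simp
      next
        case False
        have F: "(Fm *\<^sub>v chi k) $ i = 0" using F_mult[OF sol_c(3)[OF sol] i] ipl False by simp
        have le: "p*l - p \<le> i" using False by linarith
        have L: "(Lm *\<^sub>v yA x xa k) $ i = yA x xa k $ (i - (p*l - p))" using L_mult[OF yA_c[OF sol] i] le ipl by simp
        note dl = divmod_last[OF pp l1 ipl False]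
        have "Suc k + i div p - l = k" using dl(1) l1 by simp
        thus ?thesis using ci F L B0 dl(2) by simp
      qed
    }
    {
      assume ipl: "\<not> i < p*l" and cond: "l \<le> (i - p*l) div m + Suc k"
      have L0: "(Lm *\<^sub>v yA x xa k) $ i = 0" using L_mult[OF yA_c[OF sol] i] ipl by simp
      have jlt: "i - p*l < m*l" using i ipl by simp
      hence mp: "m > 0" by (cases m) auto
      show "chi (Suc k) $ i = uu chi (Suc k + (i - p*l) div m - l) $ ((i - p*l) mod m)"
      proof (cases "i + m < N")
        case True
        have F: "(Fm *\<^sub>v chi k) $ i = chi k $ (i+m)" using F_mult[OF sol_c(3)[OF sol] i] ipl True by simp
        have B0: "(Blm *\<^sub>v uu chi k) $ i = 0" using B_mult[OF uu_c[OF sol] i] True by simp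
        have e: "i + m - p*l = (i - p*l) + m" using ipl by simp
        have dm: "(i + m - p*l) div m = Suc ((i - p*l) div m)" "(i + m - p*l) mod m = (i - p*l) mod m"
          unfolding e using divmod_step[OF mp] by auto
        have "chi k $ (i+m) = uu chi (k + (i + m - p*l) div m - l) $ ((i + m - p*l) mod m)"
          using Suc.IH True ipl cond dm by auto
        thus ?thesis using ci F L0 B0 dm by simp
      next
        case False
        have F: "(Fm *\<^sub>v chi k) $ i = 0" using F_mult[OF sol_c(3)[OF sol] i] ipl False by simp
        have le: "N - m \<le> i" using False by linarith
        have B: "(Blm *\<^sub>v uu chi k) $ i = uu chi k $ (i - (N - m))" using B_mult[OF uu_c[OF sol] i] le by simp
        have F2: "\<not> (i - p*l) + m < m*l" using False ipl by linarith
        note dl = divmod_last[OF mp l1 jlt F2]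
        have "Suc k + (i - p*l) div m - l = k" using dl(1) l1 by simp
        moreover have "(i - p*l) mod m = i - (N - m)" using dl(2) ipl le ml by arith
        ultimately show ?thesis using ci F L0 B by simp
      qed
    }
  qed
qed

end
end

context thm_ctx begin
context
  fixes x xa chi
  assumes sol: "closed_loop_sol As Bs Cs Aa Ba Ca Fm Lm Blm K n na N x xa chi"
begin

lemma chi_stack: assumes k: "l \<le> k" shows "chi k = stack_yu p m l (yA x xa) (uu chi) (k - l)"
proof (rule eq_vecI)
  fix i assume "i < dim_vec (stack_yu p m l (yA x xa) (uu chi) (k - l))"
  hence i: "i < N" by (simp add: stack_yu_def)
  note cs = chi_struct[OF sol, of k, rule_format, OF i]
  show "chi k $ i = stack_yu p m l (yA x xa) (uu chi) (k - l) $ i"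
  proof (cases "i < p*l")
    case True
    have "chi k $ i = yA x xa (k + i div p - l) $ (i mod p)" using cs True k by simp
    moreover have "k + i div p - l = k - l + i div p" using k by simp
    ultimately show ?thesis using True i by (simp add: stack_yu_def)
  next
    case False
    have "chi k $ i = uu chi (k + (i - p*l) div m - l) $ ((i - p*l) mod m)" using cs False k by simp
    moreover have "k + (i - p*l) div m - l = k - l + (i - p*l) div m" using k by simp
    ultimately show ?thesis using False i by (simp add: stack_yu_def)
  qed
qed (use sol_c(3)[OF sol] in \<open>simp add: stack_yu_def\<close>)

lemma yA_lam: "yA x xa = (\<lambda>k. Cs *\<^sub>v x k + Ca *\<^sub>v xa k)" by (rule ext) (simp add: yA_def[OF sol])

lemma after_l: assumes k: "l \<le> k"
  shows "x k = Hx *\<^sub>v chi k" "xa k = Ha *\<^sub>v chi k" "yA x xa k = G0 *\<^sub>v chi k"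
proof -
  define s where "s = k - l"
  have ks: "k = s + l" using k by (simp add: s_def)
  have h1: "\<And>j. s \<le> j \<Longrightarrow> j < s + l \<Longrightarrow> x (Suc j) = As *\<^sub>v x j + Bs *\<^sub>v uu chi j"
    using sol_x[OF sol] by (simp add: uu_def[OF sol])
  have h2: "\<And>j. s \<le> j \<Longrightarrow> j < s + l \<Longrightarrow> xa (Suc j) = Aa *\<^sub>v xa j + Ba *\<^sub>v uu chi j"
    using sol_xa[OF sol] by (simp add: uu_def[OF sol])
  have h3: "x s \<in> carrier_vec n" "xa s \<in> carrier_vec na" using sol_c[OF sol] by auto
  have h4: "\<And>j. s \<le> j \<Longrightarrow> j < s + l \<Longrightarrow> uu chi j \<in> carrier_vec m" using uu_c[OF sol] by auto
  note a = arx3[OF h1 h2 h3 h4]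
  have st: "stack_yu p m l (\<lambda>k. Cs *\<^sub>v x k + Ca *\<^sub>v xa k) (uu chi) s = chi k"
    using chi_stack[OF k] unfolding yA_lam s_def by simp
  show "x k = Hx *\<^sub>v chi k" using a(1) unfolding st ks[symmetric] .
  show "xa k = Ha *\<^sub>v chi k" using a(2) unfolding st ks[symmetric] .
  show "yA x xa k = G0 *\<^sub>v chi k" using a(3) unfolding st ks[symmetric] yA_def[OF sol] .
qed

lemma chi_phi: assumes k: "l \<le> k" shows "chi (Suc k) = Phi *\<^sub>v chi k"
proof -
  have c: "chi k \<in> carrier_vec N" using sol_c[OF sol] by auto
  have "chi (Suc k) = Fm *\<^sub>v chi k + Lm *\<^sub>v (G0 *\<^sub>v chi k) + Blm *\<^sub>v (K *\<^sub>v chi k)"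
    using chi_step[OF sol, of k] after_l(3)[OF k] by (simp add: uu_def[OF sol])
  also have "\<dots> = Phi *\<^sub>v chi k"
  proof -
    have c1: "Fm + Blm * K \<in> carrier_mat N N" using Fm_c Blm_c K_c by simp
    have c2: "Lm * G0 \<in> carrier_mat N N" using Lm_c G0_c by simp
    have c3: "Blm * K \<in> carrier_mat N N" using Blm_c K_c by simp
    have "Phi *\<^sub>v chi k = (Fm + Blm * K) *\<^sub>v chi k + (Lm * G0) *\<^sub>v chi k"
      unfolding Phi_def using add_mult_distrib_mat_vec[OF c1 c2 c] .
    also have "(Fm + Blm * K) *\<^sub>v chi k = Fm *\<^sub>v chi k + (Blm * K) *\<^sub>v chi k" using add_mult_distrib_mat_vec[OF Fm_c c3 c] .
    also have "(Blm * K) *\<^sub>v chi k = Blm *\<^sub>v (K *\<^sub>v chi k)" using assoc_mult_mat_vec[OF Blm_c K_c c] .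
    also have "(Lm * G0) *\<^sub>v chi k = Lm *\<^sub>v (G0 *\<^sub>v chi k)" using assoc_mult_mat_vec[OF Lm_c G0_c c] .
    finally have e: "Phi *\<^sub>v chi k = Fm *\<^sub>v chi k + Blm *\<^sub>v (K *\<^sub>v chi k) + Lm *\<^sub>v (G0 *\<^sub>v chi k)" .
    have d: "dim_row Lm = N" "dim_row Fm = N" "dim_row Blm = N" using Lm_c Fm_c Blm_c by auto
    show ?thesis unfolding e by (rule eq_vecI) (simp_all add: d)
  qed
  finally show ?thesis .
qed

lemma chi_pow: "l \<le> k \<Longrightarrow> chi (k + j) = (Phi ^\<^sub>m j) *\<^sub>v chi k"
proof (induction j arbitrary: k)
  case 0 thus ?case using sol_c(3)[OF sol, of k] Phi_c by simp
next
  case (Suc j)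
  have "chi (k + Suc j) = chi (Suc k + j)" by simp
  also have "\<dots> = (Phi ^\<^sub>m j) *\<^sub>v chi (Suc k)" using Suc.IH[of "Suc k"] Suc.prems by simp
  also have "\<dots> = (Phi ^\<^sub>m j) *\<^sub>v (Phi *\<^sub>v chi k)" using chi_phi[OF Suc.prems] by simp
  also have "\<dots> = (Phi ^\<^sub>m j * Phi) *\<^sub>v chi k"
    using Phi_c sol_c(3)[OF sol, of k] by (simp add: assoc_mult_mat_vec[of _ N N _ N] pow_carrier_mat)
  finally show ?case by simp
qed

end
end

context thm_ctx begin

definition "nrm x xa chi k = x k \<bullet> x k + xa k \<bullet> xa k + chi k \<bullet> (chi k :: real vec)"

definition "c1 = 2 * mb As + 2 * mb (Bs * K) + 2 * mb Aa + 2 * mb (Ba * K) +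
   3 * (mb (Lm * Ca) + mb (Fm + Blm * K) + mb (Lm * Cs))"

lemma c1_nonneg: "c1 \<ge> 0" by (simp add: c1_def mb_nonneg add_nonneg_nonneg)

lemma nrm_nonneg: "nrm x xa chi k \<ge> 0" by (simp add: nrm_def self_dot_nonneg add_nonneg_nonneg)

context
  fixes x xa chi
  assumes sol: "closed_loop_sol As Bs Cs Aa Ba Ca Fm Lm Blm K n na N x xa chi"
begin

lemma nrm_step: "nrm x xa chi (Suc k) \<le> c1 * nrm x xa chi k"
proof -
  note c = sol_c[OF sol, of k]
  define X where "X = x k \<bullet> x k"
  define XA where "XA = xa k \<bullet> xa k"
  define CH where "CH = chi k \<bullet> chi k"
  have nn: "X \<ge> 0" "XA \<ge> 0" "CH \<ge> 0" by (simp_all add: X_def XA_def CH_def self_dot_nonneg)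
  have BK: "Bs * K \<in> carrier_mat n N" using Bs K_c by simp
  have BaK: "Ba * K \<in> carrier_mat na N" using Ba K_c by simp
  have LCa: "Lm * Ca \<in> carrier_mat N na" using Lm_c Ca by simp
  have FBK: "Fm + Blm * K \<in> carrier_mat N N" using Fm_c Blm_c K_c by simp
  have LCs: "Lm * Cs \<in> carrier_mat N n" using Lm_c Cs by simp
  have ex: "x (Suc k) = As *\<^sub>v x k + (Bs * K) *\<^sub>v chi k"
    using sol_x[OF sol, of k] assoc_mult_mat_vec[OF Bs K_c c(3)] by simp
  have exa: "xa (Suc k) = Aa *\<^sub>v xa k + (Ba * K) *\<^sub>v chi k"
    using sol unfolding closed_loop_sol_def by auto
  have ech: "chi (Suc k) = (Lm * Ca) *\<^sub>v xa k + (Fm + Blm * K) *\<^sub>v chi k + (Lm * Cs) *\<^sub>v x k"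
    using sol assoc_mult_mat_vec[OF Lm_c Cs c(1)] unfolding closed_loop_sol_def by auto
  have v1: "As *\<^sub>v x k \<in> carrier_vec n" "(Bs * K) *\<^sub>v chi k \<in> carrier_vec n" using As BK by (auto intro!: carrier_vecI)
  have v2: "Aa *\<^sub>v xa k \<in> carrier_vec na" "(Ba * K) *\<^sub>v chi k \<in> carrier_vec na" using Aa BaK by (auto intro!: carrier_vecI)
  have v3: "(Lm * Ca) *\<^sub>v xa k \<in> carrier_vec N" "(Fm + Blm * K) *\<^sub>v chi k \<in> carrier_vec N" "(Lm * Cs) *\<^sub>v x k \<in> carrier_vec N"
    using LCa FBK LCs by (auto intro!: carrier_vecI)
  have "x (Suc k) \<bullet> x (Suc k) \<le> 2 * (mb As * X) + 2 * (mb (Bs * K) * CH)"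
  proof -
    have "x (Suc k) \<bullet> x (Suc k) \<le> 2 * ((As *\<^sub>v x k) \<bullet> (As *\<^sub>v x k)) + 2 * (((Bs * K) *\<^sub>v chi k) \<bullet> ((Bs * K) *\<^sub>v chi k))"
      unfolding ex by (rule sq_add2[OF v1])
    also have "\<dots> \<le> 2 * (mb As * X) + 2 * (mb (Bs * K) * CH)"
      using mv_sq[OF As c(1)] mv_sq[OF BK c(3)] unfolding X_def CH_def by linarith
    finally show ?thesis .
  qed
  moreover have "xa (Suc k) \<bullet> xa (Suc k) \<le> 2 * (mb Aa * XA) + 2 * (mb (Ba * K) * CH)"
  proof -
    have "xa (Suc k) \<bullet> xa (Suc k) \<le> 2 * ((Aa *\<^sub>v xa k) \<bullet> (Aa *\<^sub>v xa k)) + 2 * (((Ba * K) *\<^sub>v chi k) \<bullet> ((Ba * K) *\<^sub>v chi k))"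
      unfolding exa by (rule sq_add2[OF v2])
    also have "\<dots> \<le> 2 * (mb Aa * XA) + 2 * (mb (Ba * K) * CH)"
      using mv_sq[OF Aa c(2)] mv_sq[OF BaK c(3)] unfolding XA_def CH_def by linarith
    finally show ?thesis .
  qed
  moreover have "chi (Suc k) \<bullet> chi (Suc k) \<le> 3 * (mb (Lm * Ca) * XA) + 3 * (mb (Fm + Blm * K) * CH) + 3 * (mb (Lm * Cs) * X)"
  proof -
    have "chi (Suc k) \<bullet> chi (Suc k) \<le> 3 * (((Lm * Ca) *\<^sub>v xa k) \<bullet> ((Lm * Ca) *\<^sub>v xa k)) + 3 * (((Fm + Blm * K) *\<^sub>v chi k) \<bullet> ((Fm + Blm * K) *\<^sub>v chi k))
       + 3 * (((Lm * Cs) *\<^sub>v x k) \<bullet> ((Lm * Cs) *\<^sub>v x k))"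
      unfolding ech by (rule sq_add3[OF v3])
    also have "\<dots> \<le> 3 * (mb (Lm * Ca) * XA) + 3 * (mb (Fm + Blm * K) * CH) + 3 * (mb (Lm * Cs) * X)"
      using mv_sq[OF LCa c(2)] mv_sq[OF FBK c(3)] mv_sq[OF LCs c(1)] unfolding X_def XA_def CH_def by linarith
    finally show ?thesis .
  qed
  moreover have "mb As * X \<le> mb As * (X + XA + CH)" "mb (Bs * K) * CH \<le> mb (Bs * K) * (X + XA + CH)"
    "mb Aa * XA \<le> mb Aa * (X + XA + CH)" "mb (Ba * K) * CH \<le> mb (Ba * K) * (X + XA + CH)"
    "mb (Lm * Ca) * XA \<le> mb (Lm * Ca) * (X + XA + CH)" "mb (Fm + Blm * K) * CH \<le> mb (Fm + Blm * K) * (X + XA + CH)"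
    "mb (Lm * Cs) * X \<le> mb (Lm * Cs) * (X + XA + CH)"
    using nn by (auto intro!: mult_left_mono mb_nonneg)
  ultimately have "nrm x xa chi (Suc k) \<le> c1 * (X + XA + CH)"
    unfolding nrm_def c1_def by (simp add: algebra_simps) 
  thus ?thesis unfolding nrm_def X_def XA_def CH_def .
qed

lemma nrm_early: assumes k: "k \<le> l" shows "nrm x xa chi k \<le> (c1+1)^l * nrm x xa chi 0"
proof -
  have "nrm x xa chi k \<le> (c1+1)^k * nrm x xa chi 0" for k
  proof (induction k)
    case 0 thus ?case by simp
  next
    case (Suc k)
    have "nrm x xa chi (Suc k) \<le> c1 * nrm x xa chi k" by (rule nrm_step)
    also have "\<dots> \<le> (c1+1) * nrm x xa chi k" using nrm_nonneg[of x xa chi k] by (simp add: mult_right_mono)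
    also have "\<dots> \<le> (c1+1) * ((c1+1)^k * nrm x xa chi 0)" using Suc c1_nonneg by (intro mult_left_mono) auto
    finally show ?case by (simp add: mult.assoc)
  qed
  hence "nrm x xa chi k \<le> (c1+1)^k * nrm x xa chi 0" .
  also have "\<dots> \<le> (c1+1)^l * nrm x xa chi 0"
    using k c1_nonneg nrm_nonneg[of x xa chi 0] by (intro mult_right_mono power_increasing) auto
  finally show ?thesis .
qed

lemma nrm_late:
  assumes dec: "\<forall>k i j. i < N \<longrightarrow> j < N \<longrightarrow> \<bar>(Phi ^\<^sub>m k) $$ (i,j)\<bar> \<le> C / g ^ k"
  shows "nrm x xa chi (l + j) \<le> (1 + mb Hx + mb Ha) * (real N * (real N * (C / g^j))^2) * ((c1+1)^l * nrm x xa chi 0)"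
proof -
  define k where "k = l + j"
  have kl: "l \<le> k" by (simp add: k_def)
  note c = sol_c[OF sol]
  have PJ: "Phi ^\<^sub>m j \<in> carrier_mat N N" using Phi_c by (rule pow_carrier_mat)
  define CH where "CH = chi k \<bullet> chi k"
  define CL where "CL = chi l \<bullet> chi l"
  define Bj where "Bj = real N * (real N * (C / g^j))^2"
  have Bj: "Bj \<ge> 0" by (simp add: Bj_def)
  have "CH \<le> mb (Phi ^\<^sub>m j) * CL"
    unfolding CH_def CL_def k_def chi_pow[OF sol, of l j, simplified] using mv_sq[OF PJ c(3)] by simp
  also have "\<dots> \<le> Bj * CL"
  proof (rule mult_right_mono)
    show "mb (Phi ^\<^sub>m j) \<le> Bj" unfolding Bj_def using dec by (intro mb_bound[OF PJ]) auto
  qed (simp add: CL_def self_dot_nonneg)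
  finally have CHb: "CH \<le> Bj * CL" .
  have "x k \<bullet> x k \<le> mb Hx * CH" unfolding CH_def after_l(1)[OF sol kl] using mv_sq[OF Hx_c c(3)] .
  moreover have "xa k \<bullet> xa k \<le> mb Ha * CH" unfolding CH_def after_l(2)[OF sol kl] using mv_sq[OF Ha_c c(3)] .
  ultimately have "nrm x xa chi k \<le> (1 + mb Hx + mb Ha) * CH" unfolding nrm_def CH_def by (simp add: algebra_simps)
  also have "\<dots> \<le> (1 + mb Hx + mb Ha) * (Bj * CL)" using CHb mb_nonneg[of Hx] mb_nonneg[of Ha] by (intro mult_left_mono) auto
  also have "CL \<le> nrm x xa chi l" unfolding CL_def nrm_def using self_dot_nonneg[of "x l"] self_dot_nonneg[of "xa l"] by simp
  hence "(1 + mb Hx + mb Ha) * (Bj * CL) \<le> (1 + mb Hx + mb Ha) * (Bj * ((c1+1)^l * nrm x xa chi 0))"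
    using nrm_early[of l] Bj mb_nonneg[of Hx] mb_nonneg[of Ha] by (intro mult_left_mono) auto
  finally show ?thesis unfolding k_def Bj_def by (simp add: mult.assoc)
qed

end
end

context thm_ctx begin

lemma GAS: "closed_loop_GAS As Bs Cs Aa Ba Ca Fm Lm Blm K n na N"
proof -
  obtain C g where g: "g > 1" and dc: "\<forall>k i j. i < N \<longrightarrow> j < N \<longrightarrow> \<bar>(Phi ^\<^sub>m k) $$ (i,j)\<bar> \<le> C / g ^ k"
    using pow_decay[OF Phi_c N_pos P_c P_pos dec] by blast
  define c2 where "c2 = (c1+1)^l"
  define c3 where "c3 = 1 + mb Hx + mb Ha"
  define c4 where "c4 = c3 * (real N * (real N * C)^2) * c2"
  define q where "q = 1 / g^2"
  have c2: "c2 \<ge> 0" using c1_nonneg by (simp add: c2_def)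
  have c3: "c3 \<ge> 0" using mb_nonneg[of Hx] mb_nonneg[of Ha] by (simp add: c3_def)
  have c4: "c4 \<ge> 0" using c2 c3 by (simp add: c4_def)
  have q0: "q \<ge> 0" and q1: "q < 1" using g by (auto simp: q_def)
  define Bnd where "Bnd = c2 + c4"
  have Bnd: "Bnd \<ge> 0" using c2 c4 by (simp add: Bnd_def)
  have late: "nrm x xa chi (l + j) \<le> c4 * q^j * nrm x xa chi 0"
    if sol: "closed_loop_sol As Bs Cs Aa Ba Ca Fm Lm Blm K n na N x xa chi" for x xa chi j
  proof -
    have "(real N * (C / g^j))^2 = (real N * C)^2 * q^j"
      by (simp add: q_def power_divide power_mult_distrib power_one_over field_simps flip: power_mult)
    thus ?thesis using nrm_late[OF sol dc, of j] unfolding c4_def c3_def c2_def by (simp add: ac_simps)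
  qed
  have allb: "nrm x xa chi k \<le> Bnd * nrm x xa chi 0"
    if sol: "closed_loop_sol As Bs Cs Aa Ba Ca Fm Lm Blm K n na N x xa chi" for x xa chi k
  proof (cases "k \<le> l")
    case True
    have "nrm x xa chi k \<le> c2 * nrm x xa chi 0" using nrm_early[OF sol True] by (simp add: c2_def)
    also have "\<dots> \<le> Bnd * nrm x xa chi 0" using c4 nrm_nonneg[of x xa chi 0] by (intro mult_right_mono) (auto simp: Bnd_def)
    finally show ?thesis .
  next
    case False
    then obtain j where kj: "k = l + j" by (metis le_add_diff_inverse nle_le)
    have "nrm x xa chi k \<le> c4 * q^j * nrm x xa chi 0" using late[OF sol] kj by simp
    also have "\<dots> \<le> c4 * 1 * nrm x xa chi 0" using q0 q1 c4 nrm_nonneg[of x xa chi 0]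
      by (intro mult_right_mono mult_left_mono) (auto simp: power_le_one)
    also have "\<dots> \<le> Bnd * nrm x xa chi 0" using c2 nrm_nonneg[of x xa chi 0] by (intro mult_right_mono) (auto simp: Bnd_def)
    finally show ?thesis .
  qed
  have cln: "cl_norm (x k) (xa k) (chi k) = sqrt (nrm x xa chi k)" for x xa chi k
    by (simp add: cl_norm_def nrm_def)
  show ?thesis unfolding closed_loop_GAS_def
  proof (intro conjI allI impI)
    fix e :: real assume e: "e > 0"
    define d where "d = e / sqrt (Bnd + 1)"
    have sB: "sqrt (Bnd + 1) > 0" using Bnd by simp
    have d: "d > 0" using e sB by (simp add: d_def)
    show "\<exists>d>0. \<forall>x xa chi. closed_loop_sol As Bs Cs Aa Ba Ca Fm Lm Blm K n na N x xa chi \<longrightarrow>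
        cl_norm (x 0) (xa 0) (chi 0) < d \<longrightarrow> (\<forall>k. cl_norm (x k) (xa k) (chi k) < e)"
    proof (intro exI[of _ d] conjI allI impI)
      show "d > 0" by fact
      fix x xa chi k
      assume sol: "closed_loop_sol As Bs Cs Aa Ba Ca Fm Lm Blm K n na N x xa chi"
        and small: "cl_norm (x 0) (xa 0) (chi 0) < d"
      define r0 where "r0 = nrm x xa chi 0"
      have r0: "r0 \<ge> 0" by (simp add: r0_def nrm_nonneg)
      have "cl_norm (x 0) (xa 0) (chi 0) = sqrt r0" by (simp add: cl_norm_def nrm_def r0_def)
      hence "sqrt r0 < d" using small by simp
      hence "(sqrt r0)^2 < d^2" using r0 by (intro power_strict_mono) auto
      hence r0d: "r0 < d^2" using r0 by simp
      have d2: "d^2 * (Bnd + 1) = e^2" using sB Bnd by (simp add: d_def power_divide)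
      have "nrm x xa chi k \<le> Bnd * r0" using allb[OF sol] by (simp add: r0_def)
      also have "\<dots> \<le> (Bnd + 1) * r0" using r0 by (simp add: distrib_right)
      also have "\<dots> < (Bnd + 1) * d^2" using r0d Bnd by simp
      also have "\<dots> = e^2" using d2 by (simp add: mult.commute)
      finally have "nrm x xa chi k < e^2" .
      hence "sqrt (nrm x xa chi k) < sqrt (e^2)" by (rule real_sqrt_less_mono)
      moreover have "cl_norm (x k) (xa k) (chi k) = sqrt (nrm x xa chi k)" by (simp add: cl_norm_def nrm_def)
      ultimately show "cl_norm (x k) (xa k) (chi k) < e" using e by simp
    qed
  next
    fix x xa chi
    assume sol: "closed_loop_sol As Bs Cs Aa Ba Ca Fm Lm Blm K n na N x xa chi"
    define r0 where "r0 = nrm x xa chi 0"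
    have "(\<lambda>j. c4 * r0 * q^j) \<longlonglongrightarrow> c4 * r0 * 0"
      by (intro tendsto_mult_left LIMSEQ_power_zero) (use q0 q1 in simp)
    hence lim0: "(\<lambda>j. c4 * r0 * q^j) \<longlonglongrightarrow> 0" by simp
    have "(\<lambda>j. nrm x xa chi (j + l)) \<longlonglongrightarrow> 0"
    proof (rule tendsto_sandwich[OF _ _ tendsto_const lim0])
      show "\<forall>\<^sub>F j in sequentially. 0 \<le> nrm x xa chi (j + l)" by (simp add: nrm_nonneg)
      have h: "nrm x xa chi (j + l) \<le> c4 * r0 * q^j" for j
      proof -
        have "nrm x xa chi (j + l) = nrm x xa chi (l + j)" by (simp add: add.commute)
        also have "\<dots> \<le> c4 * q^j * r0" using late[OF sol] by (simp add: r0_def)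
        also have "\<dots> = c4 * r0 * q^j" by (simp add: mult_ac)
        finally show ?thesis .
      qed
      show "\<forall>\<^sub>F j in sequentially. nrm x xa chi (j + l) \<le> c4 * r0 * q^j"
        using h by (intro always_eventually allI) auto
    qed
    hence "nrm x xa chi \<longlonglongrightarrow> 0" by (rule LIMSEQ_offset)
    hence "(\<lambda>k. sqrt (nrm x xa chi k)) \<longlonglongrightarrow> sqrt 0" by (rule tendsto_real_sqrt)
    moreover have "(\<lambda>k. cl_norm (x k) (xa k) (chi k)) = (\<lambda>k. sqrt (nrm x xa chi k))"
      by (intro ext) (simp add: cl_norm_def nrm_def)
    ultimately show "(\<lambda>k. cl_norm (x k) (xa k) (chi k)) \<longlonglongrightarrow> 0" by simp
  qed
qed

end

theorem theorem2:
  fixes n m p l T :: nat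
    and As Bs Cs Aa Ba Ca Th P Y :: "real mat"
    and xd xam um du dy ym :: "nat \<Rightarrow> real vec"
  assumes As: "As \<in> carrier_mat n n" and Bs: "Bs \<in> carrier_mat n m"
    and Cs: "Cs \<in> carrier_mat p n"
    and obs: "obs_index As Cs l"
    and pl: "p * l > n"
    and Aa: "Aa \<in> carrier_mat (p*l - n) (p*l - n)"
    and Ba: "Ba \<in> carrier_mat (p*l - n) m"
    and Ca: "Ca \<in> carrier_mat p (p*l - n)"
    and dims: "\<forall>k\<le>T+1. xd k \<in> carrier_vec n \<and> xam k \<in> carrier_vec (p*l - n)"
    and dims2: "\<forall>k\<le>T. um k \<in> carrier_vec m \<and> du k \<in> carrier_vec m \<and>
                       dy k \<in> carrier_vec p \<and> ym k \<in> carrier_vec p"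
    and plant: "\<forall>k\<le>T. xd (Suc k) = As *\<^sub>v xd k + Bs *\<^sub>v (um k - du k)"
    and art: "\<forall>k\<le>T. xam (Suc k) = Aa *\<^sub>v xam k + Ba *\<^sub>v um k"
    and outp: "\<forall>k\<le>T. ym k = Cs *\<^sub>v xd k + dy k + Ca *\<^sub>v xam k"
    and Th: "psd_mat Th (p + p*l + m*l)"
    and noise: "let dyaug = (\<lambda>k. dy k + dya Aa Ba Ca du k);
                    D = Delta10 p m l T dyaug du
                in psd_mat (Th - D * D\<^sup>T) (p + p*l + m*l)"
    and exc: "let Ps0 = Psi0 p m l T ym um
              in pd_mat (Ps0 * Ps0\<^sup>T - Th22 p (p*l + m*l) Th) (p*l + m*l)"
    and P: "pd_mat P (p*l + m*l)"
    and Y: "Y \<in> carrier_mat m (p*l + m*l)"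
    and LMI: "let N = p*l + m*l; Ps0 = Psi0 p m l T ym um; Ps1 = Psi1 p m l T ym um;
                  L = L_mat p m l; F = F_mat p m l; Bl = B_mat p m l;
                  Aaug = Ps0 * Ps0\<^sup>T - Th22 p N Th;
                  Baug = - (L\<^sup>T * Ps1 * Ps0\<^sup>T) + Th12 p N Th;
                  Caug = L\<^sup>T * Ps1 * Ps1\<^sup>T * L - Th11 p Th
              in nd_mat (block3 N (\<lambda>i j.
                   if i = 0 \<and> j = 0 then - P - L * Caug * L\<^sup>T
                   else if i = 0 \<and> j = 1 then F * P + Bl * Y
                   else if i = 0 \<and> j = 2 then L * Baug
                   else if i = 1 \<and> j = 0 then P * F\<^sup>T + Y\<^sup>T * Bl\<^sup>T
                   else if i = 1 \<and> j = 1 then - P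
                   else if i = 1 \<and> j = 2 then - P
                   else if i = 2 \<and> j = 0 then Baug\<^sup>T * L\<^sup>T
                   else if i = 2 \<and> j = 1 then - P
                   else - Aaug)) (3 * N)"
  shows "let K = Y * the (mat_inverse P)
         in closed_loop_GAS As Bs Cs Aa Ba Ca (F_mat p m l) (L_mat p m l) (B_mat p m l) K
              n (p*l - n) (p*l + m*l)"
proof -
  interpret thm_ctx n m p l T As Bs Cs Aa Ba Ca Th P Y xd xam um du dy ym
    by (rule thm_ctx.intro[OF assms])
  show ?thesis using GAS unfolding Fm_def Lm_def Blm_def Let_def K_eq .
qed

end
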